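(* Consider adversarial training. On the event $\mathcal E$, for every iteration $t\le T$, every filter $r\in[m]$ and every noise patch $(i,j)$ with $i\in[N]$, $j\ne s(\mathbf X_i)$, the noise coefficient satisfies $\rho^{(t)}_{i,j,r}\le\dfrac{10\log^{1/3}T}{\sigma_n^2d}$.
   Context: Data. Fix integers $N,P,d,m$ and reals $\alpha,\sigma_n,\sigma_0,\eta,\epsilon,\Gamma>0$, $\delta\in(0,1)$, and a horizon $T\in\mathbb N$. Let $\mathbf u=\mathbf e_1$, $\mathbf v=\mathbf e_d$ and $\Pi_{\mathcal F}$ the orthogonal projection onto $\mathrm{span}\{\mathbf u,\mathbf v\}$. Fix a partition $[N]=\mathcal S_L\sqcup\mathcal S_U$, $p_{\mathrm{un}}=|\mathcal S_U|/N$. Independently for each $i$: $y_i$ uniform on $\{\pm1\}$, $s(\mathbf X_i)$ uniform on $[P]$, $\mathbf x_{i,s(\mathbf X_i)}=\alpha y_i\mathbf u$ if $i\in\mathcal S_L$ and $\alpha y_i\mathbf v$ if $i\in\mathcal S_U$, noise patches $\mathbf x_{i,p}\sim\mathcal N(\mathbf 0,\sigma_n^2(\mathbf I_d-\Pi_{\mathcal F}))$ for $p\ne s(\mathbf X_i)$, independent. Student $f_{\mathbf W}(\mathbf X)=\sum_{r=1}^m\sum_{p=1}^P[\phi(\langle\mathbf w_r,\mathbf x_p\rangle)-\phi(-\langle\mathbf w_r,\mathbf x_p\rangle)]$, $\phi(z)=(\max\{0,z\})^3$; $w^{(0)}_{r,j}\sim\mathcal N(0,\sigma_0^2)$ i.i.d.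 for $j<d$, $w^{(0)}_{r,d}=0$, $w_{r,d}=0$ maintained. $\ell(z)=\log(1+e^{-z})$, $\psi(z)=(1+e^{z})^{-1}$. $\tilde{\mathbf X}^{(t)}_i$ maximizes $\ell(y_if_{\mathbf W^{(t)}}(\mathbf X'))$ over $\|\mathbf X'-\mathbf X_i\|_\infty\le\epsilon$, $\mathbf X'-\mathbf X_i\in\mathrm{span}(\mathbf x_{i,s(\mathbf X_i)})$. Adversarial training: $\mathbf W^{(t+1)}=\mathbf W^{(t)}-\frac\eta N\sum_i\nabla_{\mathbf W}\ell(y_if_{\mathbf W}(\tilde{\mathbf X}^{(t)}_i))|_{\mathbf W^{(t)}}$ with $\tilde{\mathbf X}^{(t)}_i$ fixed. Noise coefficients: $\rho^{(0)}_{i,j,r}=0$ and $\rho^{(t+1)}_{i,j,r}-\rho^{(t)}_{i,j,r}=\frac{3\eta}{N}\psi(y_if_{\mathbf W^{(t)}}(\tilde{\mathbf X}^{(t)}_i))\langle\mathbf w^{(t)}_r,\mathbf x_{i,j}\rangle^2$ for $i\in[N]$, $j\ne s(\mathbf X_i)$, $r\in[m]$. Standing parameter conditions (for a sufficiently large universal constant $C>0$): (i) $T\ge CN/(\eta\sigma_0\sigma_n^3d^{3/2})$; (ii) $d\ge Cm^2P^2N^2\log^4(TNmP/\delta)$; (iii) $\alpha\ge C\sigma_n\sqrt d\log(TNmP/\delta)/(N^{1/3}(1-p_{\mathrm{un}})^{1/3})$; (iv) $\sigma_0\le C^{-1}\min\{\frac{1}{m^{2/3}P^{2/3}\sigma_n\sqrt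 d},\frac{1}{\alpha m^{2/3}},\frac{1}{\sigma_nm^2P^{1/2}d}\}/\log(TdNmP/\delta)$; (v) $\eta\le C^{-1}\min\{\frac1{\alpha^3\sigma_0},\frac1{\sigma_n^2d},\frac1{\alpha^2}\}/\log(TNmP/\delta)$; (vi) $C\sigma_nmP^{1/2}\log(TdNP/\delta)\le\epsilon<C^{-1}\min\{\alpha,\frac1{m\sigma_0d}\}$; (vii) either $p_{\mathrm{un}}=0$, or $C/N\le p_{\mathrm{un}}\le C^{-1}\log d/N$, and $N\ge CmP\log(TdNmP/\delta)$; (viii) $C\log(NP/\delta)\le m\le C\log^Cd$, $2\le P\le C$; (ix) $\Gamma\ge Cd$. Event $\mathcal E$: for all $r\in[m]$, $i,k\in[N]$, $j\ne s(\mathbf X_i)$, $q\ne s(\mathbf X_k)$, $(i,j)\ne(k,q)$: $\frac12\sigma_n^2d\le\|\mathbf x_{i,j}\|_2^2\le\frac32\sigma_n^2d$; $|\langle\mathbf x_{i,j},\mathbf x_{k,q}\rangle|\le2\sigma_n^2\sqrt{d\log(16N^2P^2/\delta)}$; $\|\mathbf x_{i,j}\|_\infty\le\sigma_n\sqrt{2\log(16dNP/\delta)}$; $\|\mathbf w_r^{(0)}\|_2\le2\sigma_0\sqrt d$; $|\langle\mathbf w^{(0)}_r,\mathbf e_1\rangle|\le\sigma_0\sqrt{2\log(16m/\delta)}$; $|\langle\mathbf w^{(0)}_r,\mathbf x_{i,j}\rangle|\le2\sigma_0\sigma_n\sqrt{d\log(16NmP/\delta)}$; $\frac12\sigma_0\le\max_r\langle\mathbf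 w^{(0)}_r,\mathbf e_1\rangle\le\sigma_0\sqrt{2\log(16m/\delta)}$; $\frac14\sigma_0\sigma_n\sqrt d\le\max_ry_i\langle\mathbf w^{(0)}_r,\mathbf x_{i,j}\rangle\le2\sigma_0\sigma_n\sqrt{d\log(16NmP/\delta)}$. *)

theory Defs
  imports "HOL-Analysis.Analysis"
begin

text \<open>Vectors in R^d are functions nat => real, only coordinates 1..d are
read (u = e_1 is coordinate 1, v = e_d is coordinate d). A data point X is a function
patch => coordinate => real with patches 1..P. Samples are indexed 1..N, filters 1..m.
Weights W :: filter => coordinate => real.\<close>

definition inner_d :: "nat \<Rightarrow> (nat \<Rightarrow> real) \<Rightarrow> (nat \<Rightarrow> real) \<Rightarrow> real" where
  "inner_d d a b = (\<Sum>k = 1..d. a k * b k)"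

definition phi :: "real \<Rightarrow> real" where
  "phi z = (max 0 z) ^ 3"

definition fnet :: "nat \<Rightarrow> nat \<Rightarrow> nat \<Rightarrow> (nat \<Rightarrow> nat \<Rightarrow> real) \<Rightarrow> (nat \<Rightarrow> nat \<Rightarrow> real) \<Rightarrow> real" where
  "fnet m P d W X = (\<Sum>r = 1..m. \<Sum>p = 1..P.
      phi (inner_d d (W r) (X p)) - phi (- inner_d d (W r) (X p)))"

definition logistic_loss :: "real \<Rightarrow> real" where
  "logistic_loss z = ln (1 + exp (- z))"

definition psi :: "real \<Rightarrow> real" where
  "psi z = 1 / (1 + exp z)"

definition grad_loss :: "nat \<Rightarrow> nat \<Rightarrow> nat \<Rightarrow> (nat \<Rightarrow> nat \<Rightarrow> real) \<Rightarrow> real \<Rightarrow>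
    (nat \<Rightarrow> nat \<Rightarrow> real) \<Rightarrow> nat \<Rightarrow> nat \<Rightarrow> real" where
  "grad_loss m P d W y X r k =
     deriv (\<lambda>c. logistic_loss (y * fnet m P d (W(r := (W r)(k := W r k + c))) X)) 0"

definition adv_feasible :: "nat \<Rightarrow> nat \<Rightarrow> real \<Rightarrow> nat \<Rightarrow> (nat \<Rightarrow> nat \<Rightarrow> real) \<Rightarrow>
    (nat \<Rightarrow> nat \<Rightarrow> real) \<Rightarrow> bool" where
  "adv_feasible P d eps s Xi X' \<longleftrightarrow>
     (\<forall>p\<in>{1..P}. \<forall>k\<in>{1..d}. \<bar>X' p k - Xi p k\<bar> \<le> eps) \<and>
     (\<exists>c::real. \<forall>p\<in>{1..P}. \<forall>k\<in>{1..d}.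
         X' p k - Xi p k = (if p = s then c * Xi s k else 0))"

definition is_adv_example :: "nat \<Rightarrow> nat \<Rightarrow> nat \<Rightarrow> real \<Rightarrow> (nat \<Rightarrow> nat \<Rightarrow> real) \<Rightarrow>
    real \<Rightarrow> nat \<Rightarrow> (nat \<Rightarrow> nat \<Rightarrow> real) \<Rightarrow> (nat \<Rightarrow> nat \<Rightarrow> real) \<Rightarrow> bool" where
  "is_adv_example m P d eps W y s Xi Xa \<longleftrightarrow>
     adv_feasible P d eps s Xi Xa \<and>
     (\<forall>X'. adv_feasible P d eps s Xi X' \<longrightarrow>
        logistic_loss (y * fnet m P d W X') \<le> logistic_loss (y * fnet m P d W Xa))"

definition adv_training ::
  "nat \<Rightarrow> nat \<Rightarrow> nat \<Rightarrow> nat \<Rightarrow> real \<Rightarrow> real \<Rightarrow> (nat \<Rightarrow> real) \<Rightarrow> (nat \<Rightarrow> nat) \<Rightarrow>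
   (nat \<Rightarrow> nat \<Rightarrow> nat \<Rightarrow> real) \<Rightarrow>
   (nat \<Rightarrow> nat \<Rightarrow> nat \<Rightarrow> real) \<Rightarrow> (nat \<Rightarrow> nat \<Rightarrow> nat \<Rightarrow> nat \<Rightarrow> real) \<Rightarrow> bool" where
  "adv_training N P d m eta eps y s X W Xa \<longleftrightarrow>
     (\<forall>r\<in>{1..m}. W 0 r d = 0) \<and>
     (\<forall>t. \<forall>i\<in>{1..N}. is_adv_example m P d eps (W t) (y i) (s i) (X i) (Xa t i)) \<and>
     (\<forall>t. \<forall>r\<in>{1..m}. \<forall>k.
        W (Suc t) r k = (if k = d then 0
          else W t r k - eta / real N * (\<Sum>i = 1..N. grad_loss m P d (W t) (y i) (Xa t i) r k)))"

primrec rho :: "nat \<Rightarrow> nat \<Rightarrow> nat \<Rightarrow> nat \<Rightarrow> real \<Rightarrow> (nat \<Rightarrow> real) \<Rightarrow> (nat \<Rightarrow> nat \<Rightarrow> nat \<Rightarrow> real) \<Rightarrow>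
    (nat \<Rightarrow> nat \<Rightarrow> nat \<Rightarrow> real) \<Rightarrow> (nat \<Rightarrow> nat \<Rightarrow> nat \<Rightarrow> nat \<Rightarrow> real) \<Rightarrow>
    nat \<Rightarrow> nat \<Rightarrow> nat \<Rightarrow> nat \<Rightarrow> real" where
  "rho N P d m eta y X W Xa 0 i j r = 0"
| "rho N P d m eta y X W Xa (Suc t) i j r =
     rho N P d m eta y X W Xa t i j r
     + 3 * eta / real N * psi (y i * fnet m P d (W t) (Xa t i))
         * (inner_d d (W t r) (X i j)) ^ 2"

definition data_model :: "nat \<Rightarrow> nat \<Rightarrow> nat \<Rightarrow> real \<Rightarrow> nat set \<Rightarrow> nat set \<Rightarrow>
    (nat \<Rightarrow> real) \<Rightarrow> (nat \<Rightarrow> nat) \<Rightarrow> (nat \<Rightarrow> nat \<Rightarrow> nat \<Rightarrow> real) \<Rightarrow> bool" where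
  "data_model N P d alpha SL SU y s X \<longleftrightarrow>
     SL \<union> SU = {1..N} \<and> SL \<inter> SU = {} \<and>
     (\<forall>i\<in>{1..N}. y i \<in> {-1, 1} \<and> s i \<in> {1..P}) \<and>
     (\<forall>i\<in>SL. \<forall>k\<in>{1..d}. X i (s i) k = alpha * y i * (if k = 1 then 1 else 0)) \<and>
     (\<forall>i\<in>SU. \<forall>k\<in>{1..d}. X i (s i) k = alpha * y i * (if k = d then 1 else 0)) \<and>
     (\<forall>i\<in>{1..N}. \<forall>p\<in>{1..P}. p \<noteq> s i \<longrightarrow> X i p 1 = 0 \<and> X i p d = 0)"

definition eventE :: "nat \<Rightarrow> nat \<Rightarrow> nat \<Rightarrow> nat \<Rightarrow> real \<Rightarrow> real \<Rightarrow> real \<Rightarrow>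
    (nat \<Rightarrow> real) \<Rightarrow> (nat \<Rightarrow> nat) \<Rightarrow> (nat \<Rightarrow> nat \<Rightarrow> nat \<Rightarrow> real) \<Rightarrow>
    (nat \<Rightarrow> nat \<Rightarrow> real) \<Rightarrow> bool" where
  "eventE N P d m sigma_n sigma_0 delta y s X W0 \<longleftrightarrow>
     (\<forall>i\<in>{1..N}. \<forall>j\<in>{1..P}. j \<noteq> s i \<longrightarrow>
        1/2 * sigma_n^2 * real d \<le> inner_d d (X i j) (X i j) \<and>
        inner_d d (X i j) (X i j) \<le> 3/2 * sigma_n^2 * real d \<and>
        (\<forall>k\<in>{1..d}. \<bar>X i j k\<bar> \<le> sigma_n * sqrt (2 * ln (16 * real d * real N * real P / delta))) \<and>
        (\<forall>r\<in>{1..m}. \<bar>inner_d d (W0 r) (X i j)\<bar>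
           \<le> 2 * sigma_0 * sigma_n * sqrt (real d * ln (16 * real N * real m * real P / delta))) \<and>
        1/4 * sigma_0 * sigma_n * sqrt (real d) \<le> Max ((\<lambda>r. y i * inner_d d (W0 r) (X i j)) ` {1..m}) \<and>
        Max ((\<lambda>r. y i * inner_d d (W0 r) (X i j)) ` {1..m})
           \<le> 2 * sigma_0 * sigma_n * sqrt (real d * ln (16 * real N * real m * real P / delta))) \<and>
     (\<forall>i\<in>{1..N}. \<forall>j\<in>{1..P}. \<forall>k\<in>{1..N}. \<forall>q\<in>{1..P}.
        j \<noteq> s i \<longrightarrow> q \<noteq> s k \<longrightarrow> (i, j) \<noteq> (k, q) \<longrightarrow>
        \<bar>inner_d d (X i j) (X k q)\<bar>
          \<le> 2 * sigma_n^2 * sqrt (real d * ln (16 * real N^2 * real P^2 / delta))) \<and>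
     (\<forall>r\<in>{1..m}.
        sqrt (inner_d d (W0 r) (W0 r)) \<le> 2 * sigma_0 * sqrt (real d) \<and>
        \<bar>W0 r 1\<bar> \<le> sigma_0 * sqrt (2 * ln (16 * real m / delta))) \<and>
     1/2 * sigma_0 \<le> Max ((\<lambda>r. W0 r 1) ` {1..m}) \<and>
     Max ((\<lambda>r. W0 r 1) ` {1..m}) \<le> sigma_0 * sqrt (2 * ln (16 * real m / delta))"

definition param_conditions :: "real \<Rightarrow> nat \<Rightarrow> nat \<Rightarrow> nat \<Rightarrow> nat \<Rightarrow> real \<Rightarrow> real \<Rightarrow> real \<Rightarrow>
    real \<Rightarrow> real \<Rightarrow> real \<Rightarrow> real \<Rightarrow> nat \<Rightarrow> real \<Rightarrow> bool" where
  "param_conditions C N P d m alpha sigma_n sigma_0 eta eps Gam delta T p_un \<longleftrightarrow>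
     (let L = ln (real T * real N * real m * real P / delta);
          Ld = ln (real T * real d * real N * real m * real P / delta) in
     real T \<ge> C * real N / (eta * sigma_0 * sigma_n^3 * real d powr (3/2)) \<and>
     real d \<ge> C * real m^2 * real P^2 * real N^2 * L^4 \<and>
     alpha \<ge> C * sigma_n * sqrt (real d) * L / (real N powr (1/3) * (1 - p_un) powr (1/3)) \<and>
     sigma_0 \<le> (1 / C) * min (min (1 / (real m powr (2/3) * real P powr (2/3) * sigma_n * sqrt (real d)))
                                   (1 / (alpha * real m powr (2/3))))
                              (1 / (sigma_n * real m^2 * sqrt (real P) * real d)) / Ld \<and>
     eta \<le> (1 / C) * min (min (1 / (alpha^3 * sigma_0)) (1 / (sigma_n^2 * real d))) (1 / alpha^2) / L \<and>
     C * sigma_n * real m * sqrt (real P) * ln (real T * real d * real N * real P / delta) \<le> eps \<and>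
     eps < (1 / C) * min alpha (1 / (real m * sigma_0 * real d)) \<and>
     (p_un = 0 \<or> (C / real N \<le> p_un \<and> p_un \<le> (1 / C) * ln (real d) / real N)) \<and>
     real N \<ge> C * real m * real P * Ld \<and>
     C * ln (real N * real P / delta) \<le> real m \<and> real m \<le> C * ln (real d) powr C \<and>
     2 \<le> P \<and> real P \<le> C \<and>
     Gam \<ge> C * real d)"

end

theory Submission
  imports Defs
begin

lemma phi_diff: "phi z - phi (- z) = z ^ 3"
  by (cases "z \<ge> 0") (auto simp: phi_def max_def)

lemma fnet_cube: "fnet m P d W X = (\<Sum>r = 1..m. \<Sum>p = 1..P. (inner_d d (W r) (X p)) ^ 3)"
  unfolding fnet_def phi_diff ..

lemma inner_d_upd:
  assumes "k \<in> {1..d}"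
  shows "inner_d d (w(k := w k + c)) x = inner_d d w x + c * x k"
proof -
  have "inner_d d (w(k := w k + c)) x = (\<Sum>k'=1..d. w k' * x k' + (if k' = k then c * x k else 0))"
    unfolding inner_d_def by (rule sum.cong) (auto simp: algebra_simps)
  also have "\<dots> = inner_d d w x + c * x k"
    using assms by (simp add: sum.distrib inner_d_def)
  finally show ?thesis .
qed

lemma grad_formula:
  assumes r: "r \<in> {1..m}" and k: "k \<in> {1..d}"
  shows "grad_loss m P d W y X r k =
     - psi (y * fnet m P d W X) * y * (\<Sum>p = 1..P. 3 * (inner_d d (W r) (X p))^2 * X p k)"
proof -
  define I where "I = (\<lambda>r' p. inner_d d (W r') (X p))"
  define F where "F = (\<lambda>c. fnet m P d (W(r := (W r)(k := W r k + c))) X)"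
  have F: "F c = (\<Sum>r' = 1..m. \<Sum>p = 1..P. (I r' p + (if r' = r then c * X p k else 0)) ^ 3)" for c
    unfolding F_def fnet_cube I_def
    by (intro sum.cong refl) (auto simp: inner_d_upd[OF k])
  define G where "G = (\<Sum>r' = 1..m. \<Sum>p = 1..P. 3 * (I r' p + 0) ^ 2 * (if r' = r then X p k else 0))"
  have dF: "(F has_field_derivative G) (at 0)"
  proof -
    have "((\<lambda>c. \<Sum>r' = 1..m. \<Sum>p = 1..P. (I r' p + (if r' = r then c * X p k else 0)) ^ 3)
        has_field_derivative G) (at 0)"
      unfolding G_def
      apply (intro DERIV_sum)
      subgoal for r' p
        by (cases "r' = r") (auto intro!: derivative_eq_intros)
      done
    moreover have "F = (\<lambda>c. \<Sum>r' = 1..m. \<Sum>p = 1..P. (I r' p + (if r' = r then c * X p k else 0)) ^ 3)"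
      using F by (rule ext)
    ultimately show ?thesis by simp
  qed
  have G: "G = (\<Sum>p = 1..P. 3 * (inner_d d (W r) (X p))^2 * X p k)"
  proof -
    have "G = (\<Sum>r' = 1..m. if r' = r then (\<Sum>p = 1..P. 3 * (I r' p) ^ 2 * X p k) else 0)"
      unfolding G_def by (intro sum.cong refl) auto
    also have "\<dots> = (\<Sum>p = 1..P. 3 * (I r p) ^ 2 * X p k)"
      using r by (simp add: sum.delta)
    finally show ?thesis by (simp add: I_def)
  qed
  have F0: "F 0 = fnet m P d W X"
    unfolding F_def by simp
  have "((\<lambda>c. logistic_loss (y * F c)) has_field_derivative
      (1 / (1 + exp (- (y * F 0)))) * (exp (- (y * F 0)) * (- (y * G)))) (at 0)"
    unfolding logistic_loss_def
    by (rule derivative_eq_intros dF refl | simp add: add_pos_pos)+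
  then have "deriv (\<lambda>c. logistic_loss (y * F c)) 0 =
      (1 / (1 + exp (- (y * F 0)))) * (exp (- (y * F 0)) * (- (y * G)))"
    by (rule DERIV_imp_deriv)
  also have "\<dots> = - psi (y * F 0) * y * G"
  proof -
    have "exp (- (y * F 0)) / (1 + exp (- (y * F 0))) = 1 / (1 + exp (y * F 0))"
      by (simp add: exp_minus field_simps add_pos_pos)
    moreover have "(1 / (1 + exp (- (y * F 0)))) * (exp (- (y * F 0)) * (- (y * G)))
        = - (y * G) * (exp (- (y * F 0)) / (1 + exp (- (y * F 0))))" by simp
    ultimately show ?thesis unfolding psi_def by simp
  qed
  finally show ?thesis unfolding grad_loss_def F0 G by (simp add: F_def)
qed


locale Fx =
  fixes C :: real and N P d m :: nat and alpha sigma_n sigma_0 eta eps Gam delta :: real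
    and T :: nat and SL SU :: "nat set" and y :: "nat \<Rightarrow> real" and s :: "nat \<Rightarrow> nat"
    and X :: "nat \<Rightarrow> nat \<Rightarrow> nat \<Rightarrow> real" and W :: "nat \<Rightarrow> nat \<Rightarrow> nat \<Rightarrow> real"
    and Xa :: "nat \<Rightarrow> nat \<Rightarrow> nat \<Rightarrow> nat \<Rightarrow> real"
  assumes Cbig: "10^12 \<le> C"
    and apos: "alpha > 0" and snpos: "sigma_n > 0" and s0pos: "sigma_0 > 0" and etapos: "eta > 0"
    and epspos: "eps > 0" and dpos: "0 < delta" and d1: "delta < 1"
    and pc: "param_conditions C N P d m alpha sigma_n sigma_0 eta eps Gam delta T
         (real (card SU) / real N)"
    and dm: "data_model N P d alpha SL SU y s X"
    and eE: "eventE N P d m sigma_n sigma_0 delta y s X (W 0)"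
    and at: "adv_training N P d m eta eps y s X W Xa"
    and N1: "1 \<le> N"
begin

definition "LL = ln (real T * real N * real m * real P / delta)"
definition "Ld = ln (real T * real d * real N * real m * real P / delta)"

lemma pcs:
  "real T \<ge> C * real N / (eta * sigma_0 * sigma_n^3 * real d powr (3/2))"
  "real d \<ge> C * real m^2 * real P^2 * real N^2 * LL^4"
  "sigma_0 \<le> (1 / C) * min (min (1 / (real m powr (2/3) * real P powr (2/3) * sigma_n * sqrt (real d)))
                                   (1 / (alpha * real m powr (2/3))))
                              (1 / (sigma_n * real m^2 * sqrt (real P) * real d)) / Ld"
  "eta \<le> (1 / C) * min (min (1 / (alpha^3 * sigma_0)) (1 / (sigma_n^2 * real d))) (1 / alpha^2) / LL"
  "eps < (1 / C) * min alpha (1 / (real m * sigma_0 * real d))"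
  "C * ln (real N * real P / delta) \<le> real m"
  "2 \<le> P" "real P \<le> C"
  using pc unfolding param_conditions_def Let_def LL_def[symmetric] Ld_def[symmetric] by auto

lemma Cpos: "C > 0" using Cbig by simp

lemma P2: "2 \<le> P" using pcs by simp

lemma m1: "1 \<le> m"
proof -
  have "real N * real P / delta > 1"
  proof -
    have "real N \<ge> 1" "real P \<ge> 1" using N1 P2 by auto
    then have "real N * real P \<ge> 1" using mult_mono[of 1 "real N" 1 "real P"] by simp
    then show ?thesis using dpos d1 by (simp add: field_simps)
  qed
  then have "ln (real N * real P / delta) > 0" by simp
  then have "C * ln (real N * real P / delta) > 0" using Cpos by simp
  then have "real m > 0" using pcs(6) by linarith
  then show ?thesis by simp
qed

lemma d_T_1: "1 \<le> d \<and> 1 \<le> T"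
proof (rule ccontr)
  assume "\<not> (1 \<le> d \<and> 1 \<le> T)"
  then have "d = 0 \<or> T = 0" by auto
  then have "Ld = 0" unfolding Ld_def by auto
  then have "sigma_0 \<le> 0" using pcs(3) by simp
  then show False using s0pos by simp
qed

lemma ln_ge_1_minus_inv: "0 < x \<Longrightarrow> 1 - 1 / x \<le> ln (x::real)"
  using ln_le_minus_one[of "1 / x"] by (simp add: ln_div)

lemma dT: "1 \<le> d" "1 \<le> T" using d_T_1 by auto

lemma LL_half: "LL \<ge> 1/2"
proof -
  have "(2::nat) \<le> T * N * m * P"
  proof -
    have "1 * 1 * 1 * 2 \<le> T * N * m * P"
      using dT N1 m1 P2 by (intro mult_le_mono) auto
    then show ?thesis by simp
  qed
  then have a: "real T * real N * real m * real P \<ge> 2"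
    by (metis of_nat_mult of_nat_numeral of_nat_le_iff)
  have "real T * real N * real m * real P / delta \<ge> 2 / delta"
    using a dpos by (simp add: divide_right_mono)
  moreover have "2 / delta \<ge> 2" using dpos d1 by (simp add: field_simps)
  ultimately have b: "real T * real N * real m * real P / delta \<ge> 2" by linarith
  have "1 - 1 / (real T * real N * real m * real P / delta) \<le> LL" unfolding LL_def
    by (rule ln_ge_1_minus_inv) (use b in linarith)
  moreover have "1 / (real T * real N * real m * real P / delta) \<le> 1/2"
  proof -
    have p0: "0 < (real T * real N * real m * real P / delta)" using b by linarith
    have p: "0 < (real T * real N * real m * real P / delta) * 2" using p0 by (rule mult_pos_pos) simp
    show ?thesis by (rule divide_left_mono[OF b _ p]) simp
  qed
  ultimately show ?thesis by linarith
qed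

lemma Ld_ge_LL: "Ld \<ge> LL"
proof -
  have "real T * real N * real m * real P / delta > 0" using dT N1 m1 P2 dpos by simp
  moreover have "real T * real N * real m * real P / delta \<le> real T * real d * real N * real m * real P / delta"
  proof -
    have e: "real T * real d * real N * real m * real P = real d * (real T * real N * real m * real P)" by simp
    have "1 * (real T * real N * real m * real P) \<le> real d * (real T * real N * real m * real P)"
      using dT by (intro mult_right_mono) auto
    then show ?thesis unfolding e using dpos by (intro divide_right_mono) auto
  qed
  ultimately show ?thesis unfolding LL_def Ld_def by (rule ln_mono[rotated])
qed

lemma min_div_aux: "0 < C \<Longrightarrow> 0 < L \<Longrightarrow> a \<le> (1/C) * x / L \<Longrightarrow> x \<le> z \<Longrightarrow> a \<le> (1/C) * z / (L::real)"
proof -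
  assume h: "0 < C" "0 < L" "a \<le> (1/C) * x / L" "x \<le> z"
  have "(1/C) * x \<le> (1/C) * z" using h by (intro mult_left_mono) auto
  then have "(1/C) * x / L \<le> (1/C) * z / L" using h by (intro divide_right_mono) auto
  then show ?thesis using h by linarith
qed

lemma sig0: "sigma_0 \<le> 1 / (C * sigma_n * real m^2 * sqrt (real P) * real d * Ld)"
proof -
  have Ldp: "Ld > 0" using LL_half Ld_ge_LL by simp
  have "sigma_0 \<le> (1 / C) * (1 / (sigma_n * real m^2 * sqrt (real P) * real d)) / Ld"
    by (rule min_div_aux[OF Cpos Ldp pcs(3)]) (rule min.cobounded2)
  then show ?thesis by simp
qed

lemma asig: "alpha * sigma_0 \<le> 1 / (C * real m powr (2/3) * Ld)"
proof -
  have Ldp: "Ld > 0" using LL_half Ld_ge_LL by simp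
  have "sigma_0 \<le> (1 / C) * (1 / (alpha * real m powr (2/3))) / Ld"
    by (rule min_div_aux[OF Cpos Ldp pcs(3)]) (meson min.cobounded1 min.cobounded2 order_trans)
  then have h: "sigma_0 \<le> 1 / (C * (alpha * real m powr (2/3)) * Ld)" by simp
  have "alpha * sigma_0 \<le> alpha * (1 / (C * (alpha * real m powr (2/3)) * Ld))"
    using h apos by (intro mult_left_mono) auto
  moreover have "real m powr (2/3) > 0" using m1 by simp
  ultimately show ?thesis using apos Cpos Ldp by (simp add: field_simps)
qed

lemma etab: "eta \<le> 1 / (C * sigma_n^2 * real d * LL)"
proof -
  have Lp: "LL > 0" using LL_half by simp
  have "eta \<le> (1 / C) * (1 / (sigma_n^2 * real d)) / LL"
    by (rule min_div_aux[OF Cpos Lp pcs(4)]) (meson min.cobounded1 min.cobounded2 order_trans)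
  then show ?thesis by simp
qed

lemma TC: "real T \<ge> C"
proof -
  define K where "K = eta * sigma_0 * sigma_n^3 * real d powr (3/2)"
  have dp: "real d \<ge> 1" using dT by simp
  have dpow: "real d powr (3/2) = real d * sqrt (real d)"
  proof -
    have "real d powr (3/2) = real d powr (1 + 1/2)" by simp
    also have "\<dots> = real d * sqrt (real d)" using dp by (simp only: powr_add powr_half_sqrt) simp
    finally show ?thesis .
  qed
  have Lp: "LL \<ge> 1/2" using LL_half .
  have Ldp: "Ld \<ge> 1/2" using LL_half Ld_ge_LL by simp
  have Kpos: "K > 0" unfolding K_def using etapos s0pos snpos dp by simp
  have e1: "eta * (C * sigma_n^2 * real d * LL) \<le> 1"
    using etab Cpos snpos dp Lp by (simp add: le_divide_eq mult.commute)
  have e2: "sigma_0 * (C * sigma_n * real m^2 * sqrt (real P) * real d * Ld) \<le> 1"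
    using sig0 Cpos snpos dp Ldp m1 P2 by (simp add: le_divide_eq mult.commute)
  have e3: "(eta * (C * sigma_n^2 * real d * LL)) * (sigma_0 * (C * sigma_n * real m^2 * sqrt (real P) * real d * Ld)) \<le> 1 * 1"
  proof -
    have nn: "0 \<le> sigma_0 * (C * sigma_n * real m^2 * sqrt (real P) * real d * Ld)"
      using s0pos Cpos snpos Ldp by simp
    show ?thesis by (rule mult_mono[OF e1 e2 _ nn]) simp
  qed
  define Q where "Q = eta * sigma_0 * sigma_n^3 * C^2 * LL * Ld * real d"
  have Qpos: "Q \<ge> 0" unfolding Q_def using etapos s0pos snpos Cpos Lp Ldp by simp
  have s1: "1 \<le> sqrt (real d)" using dp by simp
  have "sqrt (real d) * 1 \<le> sqrt (real d) * sqrt (real d)" using s1 by (intro mult_left_mono) auto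
  then have sd: "sqrt (real d) \<le> real d" by simp
  have mp: "real m^2 * sqrt (real P) \<ge> 1"
  proof -
    have "real m^2 \<ge> 1" using m1 by simp
    moreover have "sqrt (real P) \<ge> 1" using P2 by simp
    ultimately show ?thesis using mult_mono[of 1 "real m^2" 1 "sqrt (real P)"] by simp
  qed
  have "sqrt (real d) \<le> real d * (real m^2 * sqrt (real P))"
  proof -
    have "real d * 1 \<le> real d * (real m^2 * sqrt (real P))" using mp dp by (intro mult_left_mono) auto
    then show ?thesis using sd by simp
  qed
  then have "Q * sqrt (real d) \<le> Q * (real d * (real m^2 * sqrt (real P)))"
    using Qpos by (intro mult_left_mono) auto
  moreover have "K * (C^2 * LL * Ld) = Q * sqrt (real d)"
    unfolding K_def Q_def dpow by (simp add: algebra_simps)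
  moreover have "Q * (real d * (real m^2 * sqrt (real P))) =
     (eta * (C * sigma_n^2 * real d * LL)) * (sigma_0 * (C * sigma_n * real m^2 * sqrt (real P) * real d * Ld))"
    unfolding Q_def by (simp add: algebra_simps power2_eq_square power3_eq_cube)
  ultimately have KC: "K * (C^2 * LL * Ld) \<le> 1" using e3 by linarith
  have "C * real N / K \<le> real T" using pcs(1) unfolding K_def .
  then have TK: "C * real N \<le> real T * K" using Kpos by (simp add: divide_le_eq)
  have "C * real N * (C^2 * LL * Ld) \<le> real T * K * (C^2 * LL * Ld)"
    using TK Cpos Lp Ldp by (intro mult_right_mono) auto
  also have "\<dots> = real T * (K * (C^2 * LL * Ld))" by simp
  also have "\<dots> \<le> real T * 1" using KC by (intro mult_left_mono) auto
  finally have A: "C * real N * (C^2 * LL * Ld) \<le> real T" by simp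
  have LLd: "LL * Ld \<ge> 1/2 * (1/2)" using Lp Ldp by (intro mult_mono) auto
  have "C * 1 * (C^2 * (1/4)) \<le> C * real N * (C^2 * (LL * Ld))"
    using N1 LLd Cpos by (intro mult_mono mult_left_mono) auto
  moreover have "C * 1 \<le> C * 1 * (C^2 * (1/4))"
  proof -
    have "(2::real)^2 \<le> C^2" using Cbig by (intro power_mono) auto
    then have "C^2 * (1/4) \<ge> 1" by simp
    then have "C * 1 \<le> C * (C^2 * (1/4))" using Cpos by (intro mult_left_mono) auto
    then show ?thesis by simp
  qed
  ultimately show ?thesis using A by (simp add: mult.assoc)
qed

lemma lnT: "ln (real T) \<ge> 20"
proof -
  have "exp (20::real) = exp 1 ^ 20" using exp_of_nat_mult[of 20 "1::real"] by simp
  also have "\<dots> \<le> 3 ^ 20" using exp_le by (intro power_mono) auto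
  also have "\<dots> \<le> C" using Cbig by simp
  also have "\<dots> \<le> real T" using TC .
  finally have "exp 20 \<le> real T" .
  then show ?thesis using dT by (subst ln_ge_iff) auto
qed

lemma LL_ge_lnT: "LL \<ge> ln (real T)"
proof -
  have "1 * 1 * 1 \<le> real N * real m * real P" using N1 m1 P2 by (intro mult_mono) auto
  then have a: "real N * real m * real P \<ge> 1" by simp
  have "real T = real T * 1 / 1" by simp
  also have "\<dots> \<le> real T * (real N * real m * real P) / delta"
    using a dpos d1 dT by (intro frac_le mult_left_mono) auto
  finally show ?thesis unfolding LL_def using dT by (intro ln_mono) (auto simp: mult.assoc)
qed

lemma LL_big: "LL \<ge> 20" using lnT LL_ge_lnT by linarith
lemma Ld_big: "Ld \<ge> 20" using LL_big Ld_ge_LL by linarith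

definition "sT = ln (real T) powr (1/3)"

lemma sT3: "sT ^ 3 = ln (real T)"
proof -
  have "ln (real T) \<noteq> 0" using lnT by simp
  then have "sT ^ 3 = ln (real T) powr (real 3 * (1/3))" unfolding sT_def by (rule powr_power)
  also have "\<dots> = ln (real T)" using lnT by simp
  finally show ?thesis .
qed

lemma sT_pos: "sT \<ge> 0" unfolding sT_def by simp

lemma sT2: "sT \<ge> 2"
proof (rule ccontr)
  assume "\<not> sT \<ge> 2"
  then have "sT ^ 3 \<le> 2 ^ 3" using sT_pos by (intro power_mono) auto
  then show False using sT3 lnT by simp
qed

lemma sT_le: "sT \<le> LL"
proof -
  have "1 * 1 \<le> sT * sT" using sT2 by (intro mult_mono) auto
  then have "sT * 1 \<le> sT * (sT * sT)" using sT2 by (intro mult_left_mono) auto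
  then have "sT \<le> sT ^ 3" by (simp add: power3_eq_cube)
  then show ?thesis using sT3 LL_ge_lnT by linarith
qed

lemma dmf:
  "SL \<union> SU = {1..N}" "SL \<inter> SU = {}"
  "\<And>i. i \<in> {1..N} \<Longrightarrow> y i \<in> {-1, 1}"
  "\<And>i. i \<in> {1..N} \<Longrightarrow> s i \<in> {1..P}"
  "\<And>i k. i \<in> SL \<Longrightarrow> k \<in> {1..d} \<Longrightarrow> X i (s i) k = alpha * y i * (if k = 1 then 1 else 0)"
  "\<And>i k. i \<in> SU \<Longrightarrow> k \<in> {1..d} \<Longrightarrow> X i (s i) k = alpha * y i * (if k = d then 1 else 0)"
  "\<And>i p. i \<in> {1..N} \<Longrightarrow> p \<in> {1..P} \<Longrightarrow> p \<noteq> s i \<Longrightarrow> X i p 1 = 0"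
  "\<And>i p. i \<in> {1..N} \<Longrightarrow> p \<in> {1..P} \<Longrightarrow> p \<noteq> s i \<Longrightarrow> X i p d = 0"
  using dm unfolding data_model_def by auto

lemma y_sq: "i \<in> {1..N} \<Longrightarrow> y i * y i = 1"
  using dmf(3)[of i] by auto

lemma y_abs: "i \<in> {1..N} \<Longrightarrow> \<bar>y i\<bar> = 1"
  using dmf(3)[of i] by auto

lemma ats:
  "\<And>r. r \<in> {1..m} \<Longrightarrow> W 0 r d = 0"
  "\<And>t i. i \<in> {1..N} \<Longrightarrow> is_adv_example m P d eps (W t) (y i) (s i) (X i) (Xa t i)"
  "\<And>t r k. r \<in> {1..m} \<Longrightarrow> W (Suc t) r k = (if k = d then 0
          else W t r k - eta / real N * (\<Sum>i = 1..N. grad_loss m P d (W t) (y i) (Xa t i) r k))"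
  using at unfolding adv_training_def by auto

lemma d2: "2 \<le> d"
proof -
  have "1 * 1 * 1 \<le> real m^2 * real P^2 * real N^2" using m1 P2 N1
    by (intro mult_mono) auto
  then have "real m^2 * real P^2 * real N^2 \<ge> 1" by simp
  moreover have "LL^4 \<ge> 1" using LL_big by simp
  ultimately have "1 * 1 \<le> real m^2 * real P^2 * real N^2 * LL^4" by (intro mult_mono) auto
  then have "C * 1 \<le> C * (real m^2 * real P^2 * real N^2 * LL^4)" using Cpos
    by (intro mult_left_mono) auto
  then have "C * real m^2 * real P^2 * real N^2 * LL^4 \<ge> C" by (simp add: mult.assoc)
  then have "real d \<ge> C" using pcs(2) by linarith
  then show ?thesis using Cbig by simp
qed

lemma eps_small: "eps < alpha / C"
proof -
  have "(1 / C) * min alpha (1 / (real m * sigma_0 * real d)) \<le> (1/C) * alpha"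
    using Cpos by (intro mult_left_mono) auto
  then show ?thesis using pcs(5) by simp
qed

lemma Xa_ex: assumes i: "i \<in> {1..N}"
  shows "\<exists>c. \<bar>c\<bar> < 1 \<and> (\<forall>p\<in>{1..P}. \<forall>k\<in>{1..d}.
           Xa t i p k = (if p = s i then (1 + c) * X i (s i) k else X i p k))"
proof -
  have af: "adv_feasible P d eps (s i) (X i) (Xa t i)"
    using ats(2)[OF i] unfolding is_adv_example_def by simp
  then obtain c where c: "\<forall>p\<in>{1..P}. \<forall>k\<in>{1..d}.
         Xa t i p k - X i p k = (if p = s i then c * X i (s i) k else 0)"
    unfolding adv_feasible_def by blast
  have bd: "\<forall>p\<in>{1..P}. \<forall>k\<in>{1..d}. \<bar>Xa t i p k - X i p k\<bar> \<le> eps"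
    using af unfolding adv_feasible_def by blast
  have si: "s i \<in> {1..P}" using dmf(4)[OF i] .
  have "\<exists>k0. k0 \<in> {1..d} \<and> \<bar>X i (s i) k0\<bar> = alpha"
  proof (cases "i \<in> SL")
    case True
    have "X i (s i) 1 = alpha * y i" using dmf(5)[OF True, of 1] d2 by simp
    then have "\<bar>X i (s i) 1\<bar> = alpha" using y_abs[OF i] apos by (simp add: abs_mult)
    moreover have "(1::nat) \<in> {1..d}" using d2 by simp
    ultimately show ?thesis by blast
  next
    case False
    then have "i \<in> SU" using dmf(1) i by auto
    have "X i (s i) d = alpha * y i" using dmf(6)[OF \<open>i \<in> SU\<close>, of d] d2 by simp
    then have "\<bar>X i (s i) d\<bar> = alpha" using y_abs[OF i] apos by (simp add: abs_mult)
    moreover have "d \<in> {1..d}" using d2 by simp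
    ultimately show ?thesis by blast
  qed
  then obtain k0 where k0: "k0 \<in> {1..d}" "\<bar>X i (s i) k0\<bar> = alpha" by blast
  have "\<bar>c * X i (s i) k0\<bar> \<le> eps" using bd c si k0(1) by force
  then have "\<bar>c\<bar> * alpha \<le> eps" using k0(2) by (simp add: abs_mult)
  then have "\<bar>c\<bar> * alpha < alpha / C" using eps_small by linarith
  then have "alpha * \<bar>c\<bar> < alpha * (1 / C)" by (simp add: mult.commute)
  then have "\<bar>c\<bar> < 1 / C" using apos by (simp only: mult_less_cancel_left_pos)
  also have "1 / C \<le> 1" using Cbig by simp
  finally have "\<bar>c\<bar> < 1" .
  moreover have "\<forall>p\<in>{1..P}. \<forall>k\<in>{1..d}.
           Xa t i p k = (if p = s i then (1 + c) * X i (s i) k else X i p k)"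
    using c by (auto simp: algebra_simps)
  ultimately show ?thesis by blast
qed

definition "cf t i = (SOME c. \<bar>c\<bar> < 1 \<and> (\<forall>p\<in>{1..P}. \<forall>k\<in>{1..d}.
           Xa t i p k = (if p = s i then (1 + c) * X i (s i) k else X i p k)))"

lemma cf: assumes "i \<in> {1..N}"
  shows "\<bar>cf t i\<bar> < 1"
    "\<And>p k. p \<in> {1..P} \<Longrightarrow> k \<in> {1..d} \<Longrightarrow>
           Xa t i p k = (if p = s i then (1 + cf t i) * X i (s i) k else X i p k)"
  using someI_ex[OF Xa_ex[OF assms, of t]] unfolding cf_def[symmetric] by auto

lemma inner_d_cong:
  "(\<And>k. k \<in> {1..d} \<Longrightarrow> a k = a' k) \<Longrightarrow> (\<And>k. k \<in> {1..d} \<Longrightarrow> b k = b' k) \<Longrightarrow>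
   inner_d d a b = inner_d d a' b'"
  unfolding inner_d_def by (rule sum.cong) auto

lemma Xa_noise: "i \<in> {1..N} \<Longrightarrow> p \<in> {1..P} \<Longrightarrow> p \<noteq> s i \<Longrightarrow>
   inner_d d w (Xa t i p) = inner_d d w (X i p)"
  by (rule inner_d_cong) (auto simp: cf)

lemma Xa_sig: assumes i: "i \<in> {1..N}"
  shows "inner_d d w (Xa t i (s i)) =
     (1 + cf t i) * alpha * y i * (if i \<in> SL then w 1 else w d)"
proof -
  have si: "s i \<in> {1..P}" using dmf(4)[OF i] .
  have "inner_d d w (Xa t i (s i)) = (\<Sum>k=1..d. w k * ((1 + cf t i) * X i (s i) k))"
    unfolding inner_d_def using cf(2)[OF i si] by (intro sum.cong) auto
  also have "\<dots> = (1 + cf t i) * alpha * y i * (if i \<in> SL then w 1 else w d)"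
  proof (cases "i \<in> SL")
    case True
    have "(\<Sum>k=1..d. w k * ((1 + cf t i) * X i (s i) k))
       = (\<Sum>k=1..d. if k = 1 then (1 + cf t i) * alpha * y i * w 1 else 0)"
      using dmf(5)[OF True] by (intro sum.cong) auto
    then show ?thesis using True d2 by (simp add: sum.delta)
  next
    case False
    then have "i \<in> SU" using dmf(1) i by auto
    have "(\<Sum>k=1..d. w k * ((1 + cf t i) * X i (s i) k))
       = (\<Sum>k=1..d. if k = d then (1 + cf t i) * alpha * y i * w d else 0)"
      using dmf(6)[OF \<open>i \<in> SU\<close>] by (intro sum.cong) auto
    then show ?thesis using False d2 by (simp add: sum.delta')
  qed
  finally show ?thesis .
qed

abbreviation "psit t i \<equiv> psi (y i * fnet m P d (W t) (Xa t i))"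

lemma upd: assumes r: "r \<in> {1..m}" and k: "k \<in> {1..d}" "k \<noteq> d"
  shows "W (Suc t) r k = W t r k + eta / real N * (\<Sum>i = 1..N. psit t i * y i *
      (\<Sum>p = 1..P. 3 * (inner_d d (W t r) (Xa t i p))^2 * Xa t i p k))"
proof -
  have "W (Suc t) r k = W t r k - eta / real N * (\<Sum>i = 1..N. grad_loss m P d (W t) (y i) (Xa t i) r k)"
    using ats(3)[OF r] k by simp
  also have "(\<Sum>i = 1..N. grad_loss m P d (W t) (y i) (Xa t i) r k) =
     - (\<Sum>i = 1..N. psit t i * y i * (\<Sum>p = 1..P. 3 * (inner_d d (W t r) (Xa t i p))^2 * Xa t i p k))"
  proof -
    have "(\<Sum>i = 1..N. grad_loss m P d (W t) (y i) (Xa t i) r k) =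
      (\<Sum>i = 1..N. - (psit t i * y i * (\<Sum>p = 1..P. 3 * (inner_d d (W t r) (Xa t i p))^2 * Xa t i p k)))"
      by (intro sum.cong refl) (simp only: grad_formula[OF r k(1)] mult_minus_left)
    then show ?thesis by (simp only: sum_negf)
  qed
  finally show ?thesis by simp
qed

lemma Wd: "r \<in> {1..m} \<Longrightarrow> W t r d = 0"
  by (cases t) (auto simp: ats)

lemma psi_pos: "psi z > 0" unfolding psi_def by (simp add: add_pos_pos)
lemma psi_le1: "psi z \<le> 1" unfolding psi_def by (simp add: add_pos_pos)
lemma psi_exp: "psi z \<le> exp (- z)"
  unfolding psi_def by (simp add: exp_minus field_simps add_pos_pos)

definition "Jn i = {j \<in> {1..P}. j \<noteq> s i}"
definition "Ix = (SIGMA i:{1..N}. Jn i)"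

lemma Ix_mem: "(i, j) \<in> Ix \<longleftrightarrow> i \<in> {1..N} \<and> j \<in> {1..P} \<and> j \<noteq> s i"
  unfolding Ix_def Jn_def by auto

lemma fin_Jn: "finite (Jn i)" unfolding Jn_def by simp
lemma fin_Ix: "finite Ix" unfolding Ix_def using fin_Jn by auto

lemma Ix_sub: "Ix \<subseteq> {1..N} \<times> {1..P}" using Ix_mem by auto

lemma card_Ix: "real (card Ix) \<le> real N * real P"
proof -
  have "card Ix \<le> card ({1..N} \<times> {1..P})" by (rule card_mono) (use Ix_sub in auto)
  then show ?thesis by (metis card_atLeastAtMost card_cartesian_product diff_Suc_1 of_nat_le_iff of_nat_mult)
qed

abbreviation "rh t i j r \<equiv> rho N P d m eta y X W Xa t i j r"

lemma rho_nonneg: "rh t i j r \<ge> 0"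
proof (induction t)
  case 0 then show ?case by simp
next
  case (Suc t)
  have "0 \<le> 3 * eta / real N * psit t i * (inner_d d (W t r) (X i j))^2"
    using etapos psi_pos[of "y i * fnet m P d (W t) (Xa t i)"] by simp
  then show ?case using Suc by simp
qed

lemma Xs_zero: "i \<in> {1..N} \<Longrightarrow> k \<in> {1..d} \<Longrightarrow> k \<noteq> 1 \<Longrightarrow> k \<noteq> d \<Longrightarrow> X i (s i) k = 0"
proof -
  assume i: "i \<in> {1..N}" and k: "k \<in> {1..d}" "k \<noteq> 1" "k \<noteq> d"
  show ?thesis
  proof (cases "i \<in> SL")
    case True then show ?thesis using dmf(5)[OF True k(1)] k by simp
  next
    case False then have "i \<in> SU" using dmf(1) i by auto
    then show ?thesis using dmf(6)[OF \<open>i \<in> SU\<close> k(1)] k by simp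
  qed
qed

lemma inner_sum_noise:
  assumes i: "i \<in> {1..N}" and k: "k \<in> {1..d}" "k \<noteq> 1" "k \<noteq> d"
  shows "(\<Sum>p=1..P. 3 * (inner_d d w (Xa t i p))^2 * Xa t i p k) =
         (\<Sum>p\<in>Jn i. 3 * (inner_d d w (X i p))^2 * X i p k)"
proof (rule sum.mono_neutral_cong_right)
  show "finite {1..P}" by simp
  show "Jn i \<subseteq> {1..P}" unfolding Jn_def by auto
  show "\<forall>p\<in>{1..P} - Jn i. 3 * (inner_d d w (Xa t i p))^2 * Xa t i p k = 0"
  proof
    fix p assume "p \<in> {1..P} - Jn i"
    then have p: "p = s i" "p \<in> {1..P}" unfolding Jn_def by auto
    have "Xa t i p k = 0" using cf(2)[OF i p(2) k(1)] p Xs_zero[OF i k] by simp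
    then show "3 * (inner_d d w (Xa t i p))^2 * Xa t i p k = 0" by simp
  qed
  show "\<And>p. p \<in> Jn i \<Longrightarrow> 3 * (inner_d d w (Xa t i p))^2 * Xa t i p k =
         3 * (inner_d d w (X i p))^2 * X i p k"
  proof -
    fix p assume "p \<in> Jn i"
    then have p: "p \<in> {1..P}" "p \<noteq> s i" unfolding Jn_def by auto
    show "3 * (inner_d d w (Xa t i p))^2 * Xa t i p k = 3 * (inner_d d w (X i p))^2 * X i p k"
      using Xa_noise[OF i p] cf(2)[OF i p(1) k(1)] p by simp
  qed
qed

lemma decomp: assumes r: "r \<in> {1..m}" and k: "k \<in> {2..d}"
  shows "W t r k = W 0 r k + (\<Sum>(i,j)\<in>Ix. y i * rh t i j r * X i j k)"
proof (induction t)
  case 0 then show ?case by simp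
next
  case (Suc t)
  show ?case
  proof (cases "k = d")
    case True
    have "(\<Sum>(i,j)\<in>Ix. y i * rh (Suc t) i j r * X i j k) = 0"
      using True by (intro sum.neutral) (auto simp: Ix_mem dmf(8))
    then show ?thesis using True ats(1)[OF r] ats(3)[OF r] by simp
  next
    case False
    have k1: "k \<in> {1..d}" "k \<noteq> 1" using k by auto
    have "W (Suc t) r k = W t r k + eta / real N * (\<Sum>i = 1..N. psit t i * y i *
      (\<Sum>p = 1..P. 3 * (inner_d d (W t r) (Xa t i p))^2 * Xa t i p k))"
      using upd[OF r k1(1) False] .
    also have "(\<Sum>i = 1..N. psit t i * y i *
      (\<Sum>p = 1..P. 3 * (inner_d d (W t r) (Xa t i p))^2 * Xa t i p k)) =
      (\<Sum>i = 1..N. psit t i * y i * (\<Sum>p\<in>Jn i. 3 * (inner_d d (W t r) (X i p))^2 * X i p k))"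
      using inner_sum_noise[OF _ k1(1) k1(2) False] by (intro sum.cong refl) simp
    also have "eta / real N * \<dots> = (\<Sum>i = 1..N. \<Sum>p\<in>Jn i.
        y i * (3 * eta / real N * psit t i * (inner_d d (W t r) (X i p))^2) * X i p k)"
      by (simp add: sum_distrib_left algebra_simps)
    also have "\<dots> = (\<Sum>(i,p)\<in>Ix.
        y i * (3 * eta / real N * psit t i * (inner_d d (W t r) (X i p))^2) * X i p k)"
      unfolding Ix_def using fin_Jn by (subst sum.Sigma) auto
    finally have A: "W (Suc t) r k = W t r k + (\<Sum>(i,p)\<in>Ix.
        y i * (3 * eta / real N * psit t i * (inner_d d (W t r) (X i p))^2) * X i p k)" .
    have B: "(\<Sum>(i,j)\<in>Ix. y i * rh (Suc t) i j r * X i j k) =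
       (\<Sum>(i,j)\<in>Ix. y i * rh t i j r * X i j k) +
       (\<Sum>(i,p)\<in>Ix. y i * (3 * eta / real N * psit t i * (inner_d d (W t r) (X i p))^2) * X i p k)"
      by (simp add: sum.distrib[symmetric] case_prod_beta algebra_simps)
    show ?thesis using A B Suc by simp
  qed
qed

lemma W1_mono: assumes r: "r \<in> {1..m}" shows "W t r 1 \<le> W (Suc t) r 1"
proof -
  have k: "(1::nat) \<in> {1..d}" "1 \<noteq> d" using d2 by auto
  have "0 \<le> (\<Sum>i = 1..N. psit t i * y i *
      (\<Sum>p = 1..P. 3 * (inner_d d (W t r) (Xa t i p))^2 * Xa t i p 1))"
  proof (intro sum_nonneg)
    fix i assume i: "i \<in> {1..N}"
    have "0 \<le> (\<Sum>p = 1..P. 3 * (inner_d d (W t r) (Xa t i p))^2 * (y i * Xa t i p 1))"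
    proof (intro sum_nonneg)
      fix p assume p: "p \<in> {1..P}"
      have "0 \<le> y i * Xa t i p 1"
      proof (cases "p = s i")
        case True
        have cpos: "1 + cf t i > 0" using cf(1)[OF i, of t] by linarith
        show ?thesis
        proof (cases "i \<in> SL")
          case SL: True
          have "y i * Xa t i p 1 = (1 + cf t i) * alpha * (y i * y i)"
            using cf(2)[OF i p k(1)] True dmf(5)[OF SL k(1)] by simp
          then show ?thesis using y_sq[OF i] cpos apos by simp
        next
          case False
          then have "i \<in> SU" using dmf(1) i by auto
          then show ?thesis using cf(2)[OF i p k(1)] True dmf(6)[OF \<open>i \<in> SU\<close> k(1)] k by simp
        qed
      next
        case False
        then show ?thesis using cf(2)[OF i p k(1)] dmf(7)[OF i p] by simp
      qed
      then show "0 \<le> 3 * (inner_d d (W t r) (Xa t i p))^2 * (y i * Xa t i p 1)" by simp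
    qed
    then have "0 \<le> psit t i * (\<Sum>p = 1..P. 3 * (inner_d d (W t r) (Xa t i p))^2 * (y i * Xa t i p 1))"
      using psi_pos less_imp_le by (intro mult_nonneg_nonneg) auto
    also have "\<dots> = psit t i * y i * (\<Sum>p = 1..P. 3 * (inner_d d (W t r) (Xa t i p))^2 * Xa t i p 1)"
      by (simp add: sum_distrib_left algebra_simps)
    finally show "0 \<le> psit t i * y i * (\<Sum>p = 1..P. 3 * (inner_d d (W t r) (Xa t i p))^2 * Xa t i p 1)" .
  qed
  then have "0 \<le> eta / real N * (\<Sum>i = 1..N. psit t i * y i *
      (\<Sum>p = 1..P. 3 * (inner_d d (W t r) (Xa t i p))^2 * Xa t i p 1))"
    using etapos by (intro mult_nonneg_nonneg) auto
  moreover note upd[OF r k, of t]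
  ultimately show ?thesis by linarith
qed

lemma W1_ge: assumes r: "r \<in> {1..m}" shows "W 0 r 1 \<le> W t r 1"
proof (induction t)
  case 0 then show ?case by simp
next
  case (Suc t) then show ?case using W1_mono[OF r, of t] by linarith
qed

lemma noise_inner: assumes ij: "(i, j) \<in> Ix" and r: "r \<in> {1..m}"
  shows "inner_d d (W t r) (X i j) = inner_d d (W 0 r) (X i j) +
     (\<Sum>(k,q)\<in>Ix. y k * rh t k q r * inner_d d (X k q) (X i j))"
proof -
  have ij': "i \<in> {1..N}" "j \<in> {1..P}" "j \<noteq> s i" using ij Ix_mem by auto
  have "inner_d d (W t r) (X i j) = (\<Sum>k'=1..d. (W 0 r k' + (\<Sum>(k,q)\<in>Ix. y k * rh t k q r * X k q k')) * X i j k')"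
    unfolding inner_d_def
  proof (intro sum.cong refl)
    fix k' assume "k' \<in> {1..d}"
    then show "W t r k' * X i j k' = (W 0 r k' + (\<Sum>(k,q)\<in>Ix. y k * rh t k q r * X k q k')) * X i j k'"
      using decomp[OF r, of k' t] dmf(7)[OF ij'] by (cases "k' = 1") auto
  qed
  also have "\<dots> = inner_d d (W 0 r) (X i j) + (\<Sum>k'=1..d. (\<Sum>(k,q)\<in>Ix. y k * rh t k q r * X k q k') * X i j k')"
    unfolding inner_d_def by (simp add: sum.distrib distrib_right)
  also have "(\<Sum>k'=1..d. (\<Sum>(k,q)\<in>Ix. y k * rh t k q r * X k q k') * X i j k') =
      (\<Sum>k'=1..d. \<Sum>(k,q)\<in>Ix. y k * rh t k q r * X k q k' * X i j k')"
    by (intro sum.cong refl) (simp add: sum_distrib_right case_prod_beta)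
  also have "(\<Sum>k'=1..d. \<Sum>(k,q)\<in>Ix. y k * rh t k q r * X k q k' * X i j k') =
     (\<Sum>(k,q)\<in>Ix. \<Sum>k'=1..d. y k * rh t k q r * X k q k' * X i j k')"
  proof -
    have "(\<Sum>k'=1..d. \<Sum>(k,q)\<in>Ix. y k * rh t k q r * X k q k' * X i j k') =
      (\<Sum>k'=1..d. \<Sum>x\<in>Ix. y (fst x) * rh t (fst x) (snd x) r * X (fst x) (snd x) k' * X i j k')"
      by (simp add: case_prod_beta)
    also have "\<dots> = (\<Sum>x\<in>Ix. \<Sum>k'=1..d. y (fst x) * rh t (fst x) (snd x) r * X (fst x) (snd x) k' * X i j k')"
      by (rule sum.swap)
    also have "\<dots> = (\<Sum>(k,q)\<in>Ix. \<Sum>k'=1..d. y k * rh t k q r * X k q k' * X i j k')"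
      by (simp add: case_prod_beta)
    finally show ?thesis .
  qed
  also have "\<dots> = (\<Sum>(k,q)\<in>Ix. y k * rh t k q r * inner_d d (X k q) (X i j))"
    unfolding inner_d_def by (intro sum.cong refl) (auto simp: sum_distrib_left algebra_simps)
  finally show ?thesis .
qed

definition "a0 = 2 * sigma_0 * sigma_n * sqrt (real d * ln (16 * real N * real m * real P / delta))"
definition "ib = 2 * sigma_n^2 * sqrt (real d * ln (16 * real N^2 * real P^2 / delta))"
definition "Bd = 10 * sT / (sigma_n^2 * real d)"

lemma eEf:
  "\<And>i j. (i, j) \<in> Ix \<Longrightarrow> 1/2 * sigma_n^2 * real d \<le> inner_d d (X i j) (X i j)"
  "\<And>i j. (i, j) \<in> Ix \<Longrightarrow> inner_d d (X i j) (X i j) \<le> 3/2 * sigma_n^2 * real d"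
  "\<And>i j r. (i, j) \<in> Ix \<Longrightarrow> r \<in> {1..m} \<Longrightarrow> \<bar>inner_d d (W 0 r) (X i j)\<bar> \<le> a0"
  "\<And>i j k q. (i, j) \<in> Ix \<Longrightarrow> (k, q) \<in> Ix \<Longrightarrow> (i, j) \<noteq> (k, q) \<Longrightarrow>
      \<bar>inner_d d (X i j) (X k q)\<bar> \<le> ib"
  "\<And>r. r \<in> {1..m} \<Longrightarrow> \<bar>W 0 r 1\<bar> \<le> sigma_0 * sqrt (2 * ln (16 * real m / delta))"
  using eE unfolding eventE_def Ix_mem a0_def ib_def by (auto simp: mult.assoc)

lemma sqrt_d: "sqrt C * real m * real P * real N * LL^2 \<le> sqrt (real d)"
proof -
  have "sqrt (C * real m^2 * real P^2 * real N^2 * LL^4) \<le> sqrt (real d)"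
    using pcs(2) by (rule real_sqrt_le_mono)
  moreover have "sqrt (C * real m^2 * real P^2 * real N^2 * LL^4) = sqrt C * real m * real P * real N * LL^2"
  proof -
    define z where "z = real m * real P * real N * LL^2"
    have e: "C * real m^2 * real P^2 * real N^2 * LL^4 = C * z^2"
      unfolding z_def by (simp add: power2_eq_square power4_eq_xxxx algebra_simps)
    have z0: "z \<ge> 0" unfolding z_def by simp
    have "sqrt (C * z^2) = sqrt C * sqrt (z^2)" by (rule real_sqrt_mult)
    also have "sqrt (z^2) = z" using z0 by simp
    finally have h: "sqrt (C * z^2) = sqrt C * z" .
    show ?thesis unfolding e using h unfolding z_def by (simp add: mult.assoc)
  qed
  ultimately show ?thesis by simp
qed

lemma sqrtC: "sqrt C \<ge> 10^6" "sqrt C \<le> C" "sqrt C > 0"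
proof -
  have "sqrt ((10^6)^2) \<le> sqrt C" using Cbig by (intro real_sqrt_le_mono) simp
  then show "sqrt C \<ge> 10^6" by simp
  have "sqrt C * 1 \<le> sqrt C * sqrt C" using \<open>sqrt C \<ge> 10^6\<close> Cbig by (intro mult_left_mono) auto
  moreover have "sqrt C * sqrt C = C" using Cpos by simp
  ultimately show "sqrt C \<le> C" by simp
  show "sqrt C > 0" using Cpos by simp
qed

lemma lnA: "ln (16 * real N^2 * real P^2 / delta) \<le> 2 * LL"
proof -
  have pos: "0 < 16 * real N^2 * real P^2 / delta" using N1 P2 dpos by simp
  have "16 * real N^2 * real P^2 / delta \<le> (real T * real N * real m * real P / delta)^2"
  proof -
    have "(4::real)^2 \<le> real T^2" using TC Cbig by (intro power_mono) auto
    then have T16: "16 \<le> real T^2" by simp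
    have f1: "16 * real N^2 * real P^2 * 1 \<le> real T^2 * real N^2 * real P^2 * real m^2"
      using T16 m1 by (intro mult_mono) auto
    have f2: "1 / delta \<le> 1 / delta^2"
    proof -
      have "delta * delta \<le> delta * 1" using dpos d1 by (intro mult_left_mono) auto
      then have "delta^2 \<le> delta" by (simp add: power2_eq_square)
      then show ?thesis using dpos by (intro divide_left_mono) auto
    qed
    have "16 * real N^2 * real P^2 * 1 * (1 / delta) \<le> real T^2 * real N^2 * real P^2 * real m^2 * (1/delta^2)"
      using dpos by (intro mult_mono[OF f1 f2]) auto
    then show ?thesis by (simp add: power_mult_distrib power_divide field_simps)
  qed
  then have "ln (16 * real N^2 * real P^2 / delta) \<le> ln ((real T * real N * real m * real P / delta)^2)"
    using pos by (rule ln_mono)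
  also have "\<dots> = 2 * LL" unfolding LL_def using dT N1 m1 P2 dpos by (subst ln_realpow) auto
  finally show ?thesis .
qed

lemma lnB: "ln (16 * real N * real m * real P / delta) \<le> Ld"
proof -
  have pos: "0 < 16 * real N * real m * real P / delta" using N1 P2 m1 dpos by simp
  have "16 * 1 \<le> real T * real d" using TC Cbig dT by (intro mult_mono) auto
  then have "16 * (real N * real m * real P) \<le> real T * real d * (real N * real m * real P)"
    by (intro mult_right_mono) auto
  then have "16 * real N * real m * real P / delta \<le> real T * real d * real N * real m * real P / delta"
    using dpos by (intro divide_right_mono) (auto simp: mult.assoc)
  then show ?thesis unfolding Ld_def using pos by (rule ln_mono)
qed

lemma lnM: "ln (16 * real m / delta) \<le> Ld"
proof -
  have pos: "0 < 16 * real m / delta" using m1 dpos by simp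
  have "16 * 1 * 1 * 1 \<le> real T * real d * real N * real P" using TC Cbig dT N1 P2
    by (intro mult_mono) auto
  then have a: "16 \<le> real T * real d * real N * real P" by simp
  have "16 * real m \<le> real T * real d * real N * real P * real m"
    using a m1 by (intro mult_right_mono) auto
  then have "16 * real m / delta \<le> real T * real d * real N * real m * real P / delta"
    using dpos by (intro divide_right_mono) (auto simp: ac_simps)
  then show ?thesis unfolding Ld_def using pos by (rule ln_mono)
qed

lemma sqrt_le_self: "1 \<le> x \<Longrightarrow> sqrt x \<le> (x::real)"
proof -
  assume x: "1 \<le> x"
  have "sqrt x * 1 \<le> sqrt x * sqrt x" using x by (intro mult_left_mono) auto
  then show ?thesis using x by simp
qed

lemma sqrt_2x: "2 \<le> x \<Longrightarrow> sqrt (2 * x) \<le> (x::real)"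
proof -
  assume x: "2 \<le> x"
  have "2 * x \<le> x * x" using x by (intro mult_right_mono) auto
  then have "sqrt (2 * x) \<le> sqrt (x * x)" by (rule real_sqrt_le_mono)
  then show ?thesis using x by simp
qed

lemma a0_bd: "a0 \<le> 2 / (C * real m)"
proof -
  have dp: "real d \<ge> 1" using dT by simp
  have Ld1: "Ld \<ge> 1" using Ld_big by simp
  have "sqrt (real d * ln (16 * real N * real m * real P / delta)) \<le> sqrt (real d * Ld)"
    using lnB dp by (intro real_sqrt_le_mono mult_left_mono) auto
  also have "\<dots> = sqrt (real d) * sqrt Ld" by (rule real_sqrt_mult)
  also have "\<dots> \<le> sqrt (real d) * Ld" using sqrt_le_self[OF Ld1] by (intro mult_left_mono) auto
  finally have h1: "sqrt (real d * ln (16 * real N * real m * real P / delta)) \<le> sqrt (real d) * Ld" .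
  have a0le: "a0 \<le> 2 * sigma_0 * sigma_n * (sqrt (real d) * Ld)"
    unfolding a0_def using h1 s0pos snpos by (intro mult_left_mono) auto
  define G where "G = sigma_0 * sigma_n * Ld * C * real m"
  have G0: "G \<ge> 0" unfolding G_def using s0pos snpos Ld1 Cpos by simp
  have mp: "real m \<le> real m^2 * sqrt (real P)"
  proof -
    have "real m * 1 \<le> real m * real m" using m1 by (intro mult_left_mono) auto
    also have "\<dots> * 1 \<le> real m * real m * sqrt (real P)" using P2 by (intro mult_left_mono) auto
    finally show ?thesis by (simp add: power2_eq_square)
  qed
  have sd: "sqrt (real d) \<le> real d" using sqrt_le_self dp by simp
  have "sqrt (real d) * 1 \<le> real d * (real m^2 * sqrt (real P) / real m)"
  proof -
    have "1 \<le> real m^2 * sqrt (real P) / real m" using mp m1 by simp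
    then show ?thesis using sd dp by (intro mult_mono) auto
  qed
  then have "G * sqrt (real d) \<le> G * (real d * (real m^2 * sqrt (real P) / real m))"
    using G0 by (intro mult_left_mono) auto
  also have "\<dots> = sigma_0 * (C * sigma_n * real m^2 * sqrt (real P) * real d * Ld)"
    unfolding G_def using m1 by (simp add: field_simps power2_eq_square)
  also have "\<dots> \<le> 1"
    using sig0 Cpos snpos dT Ld1 m1 P2 by (simp add: le_divide_eq mult.commute)
  finally have "G * sqrt (real d) \<le> 1" .
  then have "2 * sigma_0 * sigma_n * (sqrt (real d) * Ld) * (C * real m) \<le> 2"
    unfolding G_def by (simp add: algebra_simps)
  then have "2 * sigma_0 * sigma_n * (sqrt (real d) * Ld) \<le> 2 / (C * real m)"
    using Cpos m1 by (simp add: le_divide_eq)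
  then show ?thesis using a0le by linarith
qed

lemma cross_bd: "real (card Ix) * Bd * ib \<le> 20 / (sqrt C * real m)"
proof -
  have dp: "real d \<ge> 1" using dT by simp
  have L2: "LL \<ge> 2" using LL_big by simp
  have "sqrt (real d * ln (16 * real N^2 * real P^2 / delta)) \<le> sqrt (real d * (2 * LL))"
    using lnA dp by (intro real_sqrt_le_mono mult_left_mono) auto
  also have "\<dots> = sqrt (real d) * sqrt (2 * LL)" by (rule real_sqrt_mult)
  also have "\<dots> \<le> sqrt (real d) * LL" using sqrt_2x[OF L2] by (intro mult_left_mono) auto
  finally have h1: "sqrt (real d * ln (16 * real N^2 * real P^2 / delta)) \<le> sqrt (real d) * LL" .
  have ibl: "ib \<le> 2 * sigma_n^2 * (sqrt (real d) * LL)"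
    unfolding ib_def using h1 snpos by (intro mult_left_mono) auto
  have Bd0: "Bd \<ge> 0" unfolding Bd_def using sT_pos snpos by simp
  have "Bd * ib \<le> Bd * (2 * sigma_n^2 * (sqrt (real d) * LL))"
    using ibl Bd0 by (intro mult_left_mono) auto
  also have "\<dots> = 20 * sT * LL / sqrt (real d)"
  proof -
    have "real d = sqrt (real d) * sqrt (real d)" using dp by simp
    then show ?thesis unfolding Bd_def using snpos dp
      by (simp add: field_simps)
  qed
  also have "\<dots> \<le> 20 * LL * LL / sqrt (real d)"
    using sT_le L2 dp by (intro divide_right_mono mult_right_mono mult_left_mono) auto
  also have "\<dots> \<le> 20 * LL * LL / (sqrt C * real m * real P * real N * LL^2)"
  proof (rule divide_left_mono)
    show "sqrt C * real m * real P * real N * LL^2 \<le> sqrt (real d)" by (rule sqrt_d)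
    show "0 \<le> 20 * LL * LL" using L2 by simp
    show "0 < sqrt (real d) * (sqrt C * real m * real P * real N * LL^2)"
      using dp sqrtC m1 P2 N1 L2 by simp
  qed
  also have "\<dots> = 20 / (sqrt C * real m * real P * real N)"
    using L2 by (simp add: power2_eq_square)
  finally have BI: "Bd * ib \<le> 20 / (sqrt C * real m * real P * real N)" .
  have ib0: "ib \<ge> 0"
  proof -
    have "1 * 1 * 1 \<le> real N^2 * real P^2 * (1 / delta)" using N1 P2 dpos d1
      by (intro mult_mono) (auto simp: field_simps)
    then have "1 \<le> 16 * real N^2 * real P^2 / delta" by simp
    then have "0 \<le> ln (16 * real N^2 * real P^2 / delta)" by simp
    then show ?thesis unfolding ib_def by simp
  qed
  have "real (card Ix) * Bd * ib = real (card Ix) * (Bd * ib)" by simp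
  also have "\<dots> \<le> (real N * real P) * (20 / (sqrt C * real m * real P * real N))"
    using card_Ix BI Bd0 ib0 by (intro mult_mono) auto
  also have "\<dots> = 20 / (sqrt C * real m)" using N1 P2 by (simp add: field_simps)
  finally show ?thesis .
qed

definition "mu = real m powr (2/3)"

lemma mu: "mu > 0" "mu ^ 3 = real m ^ 2"
proof -
  show "mu > 0" unfolding mu_def using m1 by simp
  have "mu ^ 3 = real m powr (real 3 * (2/3))" unfolding mu_def
    using m1 by (intro powr_power) simp
  also have "\<dots> = real m powr 2" by simp
  also have "\<dots> = real m ^ 2" by simp
  finally show "mu ^ 3 = real m ^ 2" .
qed

lemma es_bd: "r \<in> {1..m} \<Longrightarrow> 2 * alpha * \<bar>W 0 r 1\<bar> \<le> 2 / (C * mu)"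
proof -
  assume r: "r \<in> {1..m}"
  have L2: "Ld \<ge> 2" using Ld_big by simp
  have "sqrt (2 * ln (16 * real m / delta)) \<le> sqrt (2 * Ld)"
    using lnM by (intro real_sqrt_le_mono) auto
  also have "\<dots> \<le> Ld" using sqrt_2x[OF L2] .
  finally have h: "sqrt (2 * ln (16 * real m / delta)) \<le> Ld" .
  have "2 * alpha * \<bar>W 0 r 1\<bar> \<le> 2 * alpha * (sigma_0 * sqrt (2 * ln (16 * real m / delta)))"
    using eEf(5)[OF r] apos by (intro mult_left_mono) auto
  also have "\<dots> \<le> 2 * alpha * (sigma_0 * Ld)"
    using h apos s0pos by (intro mult_left_mono) auto
  also have "\<dots> = 2 * (alpha * sigma_0) * Ld" by simp
  also have "\<dots> \<le> 2 * (1 / (C * mu * Ld)) * Ld"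
    using asig L2 unfolding mu_def by (intro mult_right_mono mult_left_mono) auto
  also have "\<dots> = 2 / (C * mu)" using L2 by simp
  finally show ?thesis .
qed

definition "en = 2 / (C * real m) + 20 / (sqrt C * real m)"
definition "es = 2 / (C * mu)"

lemma en_bd: "en \<le> 22 / (sqrt C * real m)" "en \<ge> 0" "en \<le> 1"
proof -
  have "2 / (C * real m) \<le> 2 / (sqrt C * real m)"
    using sqrtC m1 by (intro divide_left_mono mult_right_mono) auto
  then show e: "en \<le> 22 / (sqrt C * real m)" unfolding en_def by simp
  show "en \<ge> 0" unfolding en_def using Cpos sqrtC by simp
  have "22 / (sqrt C * real m) \<le> 22 / (10^6 * 1)"
    using sqrtC m1 by (intro divide_left_mono mult_mono) auto
  then show "en \<le> 1" using e by simp
qed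

lemma es0: "es \<ge> 0" unfolding es_def using Cpos mu by simp

lemma mPE: "real m * real P * (en ^ 3 + es ^ 3) \<le> 1"
proof -
  define q where "q = sqrt C"
  have q: "q \<ge> 10^6" "q * q = C" "q > 0" unfolding q_def using sqrtC Cpos by auto
  have "en ^ 3 \<le> (22 / (q * real m)) ^ 3" unfolding q_def using en_bd by (intro power_mono) auto
  then have "real m * real P * en ^ 3 \<le> real m * real P * (22 / (q * real m)) ^ 3"
    by (intro mult_left_mono) auto
  also have "\<dots> = 22^3 * real P / (q^3 * real m^2)" using m1 q Cpos by (simp add: field_simps power3_eq_cube power2_eq_square)
  also have "\<dots> \<le> 22^3 * (q * q) / (q^3 * 1)"
    using m1 q pcs(8) by (intro divide_mono mult_left_mono mult_mono) auto
  also have "\<dots> = 22^3 / q" using q(3) by (simp add: power3_eq_cube)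
  also have "\<dots> \<le> 22^3 / 10^6" using q by (intro divide_left_mono) auto
  finally have A: "real m * real P * en ^ 3 \<le> 22^3 / 10^6" .
  have "real m * real P * es ^ 3 = real m * real P * (8 / (C^3 * real m^2))"
    unfolding es_def using mu by (simp add: power_divide power_mult_distrib)
  also have "\<dots> = 8 * real P / (C^3 * real m)" using m1 by (simp add: field_simps power2_eq_square)
  also have "\<dots> \<le> 8 * C / (C^3 * 1)"
    using m1 Cpos pcs(8) by (intro divide_mono mult_left_mono mult_mono) auto
  also have "\<dots> = 8 / C^2" using Cpos by (simp add: power2_eq_square power3_eq_cube)
  also have "\<dots> \<le> 8 / 16"
  proof -
    have "(4::real)^2 \<le> C^2" using Cbig by (intro power_mono) auto
    then show ?thesis by (intro divide_left_mono) auto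
  qed
  finally have B: "real m * real P * es ^ 3 \<le> 1/2" by simp
  have "real m * real P * (en ^ 3 + es ^ 3) = real m * real P * en ^ 3 + real m * real P * es ^ 3"
    by (simp add: algebra_simps)
  then show ?thesis using A B by simp
qed

lemma Bd0: "Bd \<ge> 0" unfolding Bd_def using sT_pos snpos by simp

lemma xx0: assumes h: "(i, j) \<in> Ix" shows "inner_d d (X i j) (X i j) \<ge> 0"
proof -
  have "0 \<le> 1/2 * sigma_n^2 * real d" by simp
  then show ?thesis using eEf(1)[OF h] by linarith
qed

definition "Rs t i j r = (\<Sum>(k,q)\<in>Ix - {(i,j)}. y i * y k * rh t k q r * inner_d d (X k q) (X i j))"

lemma yinner: assumes ij: "(i, j) \<in> Ix" and r: "r \<in> {1..m}"
  shows "y i * inner_d d (W t r) (X i j) = y i * inner_d d (W 0 r) (X i j) +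
     rh t i j r * inner_d d (X i j) (X i j) + Rs t i j r"
proof -
  have i: "i \<in> {1..N}" using ij Ix_mem by auto
  have "y i * inner_d d (W t r) (X i j) = y i * inner_d d (W 0 r) (X i j) +
     (\<Sum>(k,q)\<in>Ix. y i * y k * rh t k q r * inner_d d (X k q) (X i j))"
  proof -
    have "y i * (\<Sum>(k,q)\<in>Ix. y k * rh t k q r * inner_d d (X k q) (X i j)) =
        (\<Sum>(k,q)\<in>Ix. y i * y k * rh t k q r * inner_d d (X k q) (X i j))"
      by (subst sum_distrib_left) (intro sum.cong refl, clarsimp simp: mult.assoc)
    then show ?thesis unfolding noise_inner[OF ij r, of t] distrib_left by simp
  qed
  also have "(\<Sum>(k,q)\<in>Ix. y i * y k * rh t k q r * inner_d d (X k q) (X i j)) =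
      y i * y i * rh t i j r * inner_d d (X i j) (X i j) + Rs t i j r"
    unfolding Rs_def by (subst sum.remove[OF fin_Ix ij]) simp
  finally show ?thesis using y_sq[OF i] by simp
qed

definition "Hyp t \<longleftrightarrow> (\<forall>k q r'. (k, q) \<in> Ix \<longrightarrow> r' \<in> {1..m} \<longrightarrow> rh t k q r' \<le> Bd)"

lemma Rs_bd: assumes H: "Hyp t" and ij: "(i, j) \<in> Ix" and r: "r \<in> {1..m}"
  shows "\<bar>Rs t i j r\<bar> \<le> 20 / (sqrt C * real m)"
proof -
  have i: "i \<in> {1..N}" using ij Ix_mem by auto
  have "\<bar>Rs t i j r\<bar> \<le> (\<Sum>(k,q)\<in>Ix - {(i,j)}. \<bar>y i * y k * rh t k q r * inner_d d (X k q) (X i j)\<bar>)"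
    unfolding Rs_def by (rule order_trans[OF sum_abs]) (simp add: case_prod_beta)
  also have "\<dots> \<le> (\<Sum>(k,q)\<in>Ix - {(i,j)}. Bd * ib)"
  proof (rule sum_mono)
    fix x assume x: "x \<in> Ix - {(i, j)}"
    obtain k q where kq: "x = (k, q)" by (cases x)
    have kqI: "(k, q) \<in> Ix" "(k, q) \<noteq> (i, j)" using x kq by auto
    have k: "k \<in> {1..N}" using kqI Ix_mem by auto
    have "\<bar>y i * y k * rh t k q r * inner_d d (X k q) (X i j)\<bar> = rh t k q r * \<bar>inner_d d (X k q) (X i j)\<bar>"
      using y_abs[OF i] y_abs[OF k] rho_nonneg[of t k q r] by (simp add: abs_mult)
    also have "\<dots> \<le> Bd * ib"
      using H kqI r eEf(4)[OF kqI(1) ij kqI(2)] rho_nonneg[of t k q r] Bd0 unfolding Hyp_def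
      by (intro mult_mono) auto
    finally show "(case x of (k, q) \<Rightarrow> \<bar>y i * y k * rh t k q r * inner_d d (X k q) (X i j)\<bar>) \<le>
        (case x of (k, q) \<Rightarrow> Bd * ib)" using kq by simp
  qed
  also have "\<dots> \<le> (\<Sum>(k,q)\<in>Ix. Bd * ib)"
  proof (rule sum_mono2)
    show "finite Ix" by (rule fin_Ix)
    show "Ix - {(i, j)} \<subseteq> Ix" by auto
    have "0 \<le> Bd * ib"
    proof -
      have "\<bar>inner_d d (X i j) (X i j)\<bar> \<ge> 0" by simp
      have Bd0: "Bd \<ge> 0" unfolding Bd_def using sT_pos snpos by simp
      have "ib \<ge> 0"
      proof -
        have "1 * 1 * 1 \<le> real N^2 * real P^2 * (1 / delta)" using N1 P2 dpos d1
          by (intro mult_mono) (auto simp: field_simps)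
        then have "1 \<le> 16 * real N^2 * real P^2 / delta" by simp
        then have "0 \<le> ln (16 * real N^2 * real P^2 / delta)" by simp
        then show ?thesis unfolding ib_def by simp
      qed
      then show ?thesis using Bd0 by simp
    qed
    then show "\<And>b. b \<in> Ix - (Ix - {(i, j)}) \<Longrightarrow> 0 \<le> (case b of (k, q) \<Rightarrow> Bd * ib)" by auto
  qed
  also have "\<dots> = real (card Ix) * Bd * ib" by simp
  also have "\<dots> \<le> 20 / (sqrt C * real m)" by (rule cross_bd)
  finally show ?thesis .
qed

lemma z_lower: assumes H: "Hyp t" and ij: "(i, j) \<in> Ix" and r: "r \<in> {1..m}"
  shows "y i * inner_d d (W t r) (X i j) \<ge> rh t i j r * inner_d d (X i j) (X i j) - en"
proof -
  have i: "i \<in> {1..N}" using ij Ix_mem by auto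
  have "\<bar>y i * inner_d d (W 0 r) (X i j)\<bar> \<le> a0"
    using eEf(3)[OF ij r] y_abs[OF i] by (simp add: abs_mult)
  then have "y i * inner_d d (W 0 r) (X i j) \<ge> - (2 / (C * real m))" using a0_bd by linarith
  moreover have "Rs t i j r \<ge> - (20 / (sqrt C * real m))" using Rs_bd[OF H ij r] by linarith
  ultimately show ?thesis using yinner[OF ij r, of t] unfolding en_def by linarith
qed

lemma z_upper: assumes H: "Hyp t" and ij: "(i, j) \<in> Ix" and r: "r \<in> {1..m}"
  shows "\<bar>inner_d d (W t r) (X i j)\<bar> \<le> 16 * sT"
proof -
  have i: "i \<in> {1..N}" using ij Ix_mem by auto
  have f1: "\<bar>y i * inner_d d (W 0 r) (X i j)\<bar> \<le> a0"
    using eEf(3)[OF ij r] y_abs[OF i] by (simp add: abs_mult)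
  have f2: "\<bar>Rs t i j r\<bar> \<le> 20 / (sqrt C * real m)" using Rs_bd[OF H ij r] .
  have f3: "rh t i j r * inner_d d (X i j) (X i j) \<le> Bd * (3/2 * sigma_n^2 * real d)"
    using H ij r eEf(2)[OF ij] rho_nonneg[of t i j r] Bd0 xx0[OF ij] unfolding Hyp_def
    by (intro mult_mono) auto
  have f4: "Bd * (3/2 * sigma_n^2 * real d) = 15 * sT" unfolding Bd_def using snpos dT by simp
  have f5: "rh t i j r * inner_d d (X i j) (X i j) \<ge> 0"
    using rho_nonneg[of t i j r] xx0[OF ij] by (intro mult_nonneg_nonneg) auto
  have f6: "y i * inner_d d (W t r) (X i j) = y i * inner_d d (W 0 r) (X i j) +
     rh t i j r * inner_d d (X i j) (X i j) + Rs t i j r" by (rule yinner[OF ij r])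
  have "\<bar>y i * inner_d d (W t r) (X i j)\<bar> \<le> a0 + 20 / (sqrt C * real m) + 15 * sT"
    using f1 f2 f3 f4 f5 f6 by (simp only: abs_le_iff) linarith
  also have "\<dots> \<le> en + 15 * sT" using a0_bd unfolding en_def by simp
  also have "\<dots> \<le> 16 * sT" using en_bd sT2 by simp
  finally show ?thesis using y_abs[OF i] by (simp add: abs_mult)
qed

end

context Fx begin

lemma yfnet: assumes i: "i \<in> {1..N}"
  shows "y i * fnet m P d (W t) (Xa t i) =
    (\<Sum>r'=1..m. \<Sum>p=1..P. (y i * inner_d d (W t r') (Xa t i p))^3)"
proof -
  have y3: "y i ^ 3 = y i" using y_sq[OF i] by (simp add: power3_eq_cube)
  have "y i * fnet m P d (W t) (Xa t i) =
    (\<Sum>r'=1..m. \<Sum>p=1..P. y i * (inner_d d (W t r') (Xa t i p))^3)"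
    unfolding fnet_cube by (simp add: sum_distrib_left)
  also have "\<dots> = (\<Sum>r'=1..m. \<Sum>p=1..P. (y i * inner_d d (W t r') (Xa t i p))^3)"
    by (intro sum.cong refl) (simp add: power_mult_distrib y3)
  finally show ?thesis .
qed

lemma E0: "en ^ 3 + es ^ 3 \<ge> 0" using en_bd(2) es0 by simp

lemma term_lower: assumes H: "Hyp t" and i: "i \<in> {1..N}" and r: "r' \<in> {1..m}" and p: "p \<in> {1..P}"
  shows "(y i * inner_d d (W t r') (Xa t i p))^3 \<ge> - (en ^ 3 + es ^ 3)"
proof (cases "p = s i")
  case True
  have c: "\<bar>cf t i\<bar> < 1" using cf(1)[OF i] .
  have "y i * inner_d d (W t r') (Xa t i p) \<ge> - es"
  proof (cases "i \<in> SL")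
    case SL: True
    have "y i * inner_d d (W t r') (Xa t i p) = (1 + cf t i) * alpha * (y i * y i) * W t r' 1"
      using Xa_sig[OF i, of "W t r'" t] True SL by (simp add: algebra_simps)
    also have "\<dots> = (1 + cf t i) * (alpha * W t r' 1)" using y_sq[OF i] by simp
    finally have e: "y i * inner_d d (W t r') (Xa t i p) = (1 + cf t i) * (alpha * W t r' 1)" .
    show ?thesis
    proof (cases "W t r' 1 \<ge> 0")
      case True
      then have "0 \<le> (1 + cf t i) * (alpha * W t r' 1)" using c apos by simp
      then show ?thesis using e es0 by linarith
    next
      case False
      have aw: "alpha * W t r' 1 \<le> 0" using False apos by (simp add: mult_nonneg_nonpos)
      have "(1 + cf t i) * (alpha * W t r' 1) \<ge> 2 * (alpha * W t r' 1)"
        using c aw by (intro mult_right_mono_neg) auto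
      moreover have "alpha * W t r' 1 \<ge> alpha * W 0 r' 1"
        using W1_ge[OF r, of t] apos by simp
      moreover have "2 * alpha * \<bar>W 0 r' 1\<bar> \<le> es" using es_bd[OF r] unfolding es_def .
      moreover have "W 0 r' 1 \<ge> - \<bar>W 0 r' 1\<bar>" by simp
      then have "alpha * W 0 r' 1 \<ge> alpha * (- \<bar>W 0 r' 1\<bar>)" using apos by (intro mult_left_mono) auto
      ultimately show ?thesis using e by simp
    qed
  next
    case False
    have "y i * inner_d d (W t r') (Xa t i p) = 0"
      using Xa_sig[OF i, of "W t r'" t] True False Wd[OF r] by simp
    then show ?thesis using es0 by linarith
  qed
  then have "(- es)^3 \<le> (y i * inner_d d (W t r') (Xa t i p))^3" by (intro power_mono_odd) auto
  moreover have "(- es)^3 = - (es^3)" by simp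
  moreover have "en^3 \<ge> 0" using en_bd(2) by simp
  ultimately show ?thesis by linarith
next
  case False
  have ij: "(i, p) \<in> Ix" using i p False Ix_mem by auto
  have "y i * inner_d d (W t r') (Xa t i p) = y i * inner_d d (W t r') (X i p)"
    using Xa_noise[OF i p False] by simp
  also have "\<dots> \<ge> rh t i p r' * inner_d d (X i p) (X i p) - en" by (rule z_lower[OF H ij r])
  finally have f: "rh t i p r' * inner_d d (X i p) (X i p) - en \<le> y i * inner_d d (W t r') (Xa t i p)" .
  have "0 \<le> rh t i p r' * inner_d d (X i p) (X i p)"
    using rho_nonneg[of t i p r'] xx0[OF ij] by (intro mult_nonneg_nonneg) auto
  then have "y i * inner_d d (W t r') (Xa t i p) \<ge> - en" using f by linarith
  then have "(- en)^3 \<le> (y i * inner_d d (W t r') (Xa t i p))^3" by (intro power_mono_odd) auto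
  moreover have "(- en)^3 = - (en^3)" by simp
  moreover have "es^3 \<ge> 0" using es0 by simp
  ultimately show ?thesis by linarith
qed

lemma spec_lower: assumes H: "Hyp t" and ij: "(i, j) \<in> Ix" and r: "r \<in> {1..m}"
    and big: "rh t i j r > Bd / 2"
  shows "(y i * inner_d d (W t r) (Xa t i j))^3 \<ge> 8 * ln (real T)"
proof -
  have ij': "i \<in> {1..N}" "j \<in> {1..P}" "j \<noteq> s i" using ij Ix_mem by auto
  have "(Bd / 2) * (1/2 * sigma_n^2 * real d) \<le> rh t i j r * inner_d d (X i j) (X i j)"
    using big eEf(1)[OF ij] Bd0 snpos by (intro mult_mono) auto
  moreover have "(Bd / 2) * (1/2 * sigma_n^2 * real d) = 5/2 * sT" unfolding Bd_def using snpos dT by simp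
  ultimately have "rh t i j r * inner_d d (X i j) (X i j) \<ge> 5/2 * sT" by linarith
  then have "y i * inner_d d (W t r) (X i j) \<ge> 5/2 * sT - en" using z_lower[OF H ij r] by linarith
  then have "y i * inner_d d (W t r) (X i j) \<ge> 2 * sT" using en_bd(3) sT2 by linarith
  then have "y i * inner_d d (W t r) (Xa t i j) \<ge> 2 * sT" using Xa_noise[OF ij'] by simp
  then have "(2 * sT)^3 \<le> (y i * inner_d d (W t r) (Xa t i j))^3" using sT_pos by (intro power_mono) auto
  moreover have "(2 * sT)^3 = 8 * ln (real T)" using sT3 by (simp add: power_mult_distrib)
  ultimately show ?thesis by simp
qed

lemma fnet_lower: assumes H: "Hyp t" and ij: "(i, j) \<in> Ix" and r: "r \<in> {1..m}"
    and big: "rh t i j r > Bd / 2"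
  shows "y i * fnet m P d (W t) (Xa t i) \<ge> 3 * ln (real T)"
proof -
  have ij': "i \<in> {1..N}" "j \<in> {1..P}" "j \<noteq> s i" using ij Ix_mem by auto
  define E where "E = en ^ 3 + es ^ 3"
  define K where "K = 8 * ln (real T) + E"
  have tl: "(y i * inner_d d (W t r') (Xa t i p))^3 \<ge> - E + (if r' = r \<and> p = j then K else 0)"
    if r': "r' \<in> {1..m}" and p: "p \<in> {1..P}" for r' p
  proof (cases "r' = r \<and> p = j")
    case True
    then show ?thesis using spec_lower[OF H ij r big] unfolding K_def by simp
  next
    case False
    then have "(if r' = r \<and> p = j then K else 0) = 0" by auto
    then show ?thesis using term_lower[OF H ij'(1) r' p] unfolding E_def by linarith
  qed
  have "(\<Sum>r'=1..m. \<Sum>p=1..P. - E + (if r' = r \<and> p = j then K else 0)) \<le>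
        (\<Sum>r'=1..m. \<Sum>p=1..P. (y i * inner_d d (W t r') (Xa t i p))^3)"
  proof (rule sum_mono)
    fix r' assume r': "r' \<in> {1..m}"
    show "(\<Sum>p=1..P. - E + (if r' = r \<and> p = j then K else 0)) \<le>
        (\<Sum>p=1..P. (y i * inner_d d (W t r') (Xa t i p))^3)"
    proof (rule sum_mono)
      fix p assume p: "p \<in> {1..P}"
      show "- E + (if r' = r \<and> p = j then K else 0) \<le> (y i * inner_d d (W t r') (Xa t i p))^3"
        by (rule tl[OF r' p])
    qed
  qed
  moreover have "(\<Sum>r'=1..m. \<Sum>p=1..P. - E + (if r' = r \<and> p = j then K else 0)) =
      - (real m * real P * E) + K"
  proof -
    have inner: "(\<Sum>p=1..P. - E + (if r' = r \<and> p = j then K else 0)) =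
        - (real P * E) + (if r' = r then K else 0)" for r'
    proof -
      have "(\<Sum>p=1..P. - E + (if r' = r \<and> p = j then K else 0)) =
          (\<Sum>p=1..P. - E) + (\<Sum>p=1..P. (if r' = r \<and> p = j then K else 0))"
        by (rule sum.distrib)
      moreover have "(\<Sum>p=1..P. - E) = - (real P * E)" by simp
      moreover have "(\<Sum>p=1..P. (if r' = r \<and> p = j then K else 0)) = (if r' = r then K else 0)"
      proof (cases "r' = r")
        case True
        then have "(\<Sum>p=1..P. (if r' = r \<and> p = j then K else 0)) = (\<Sum>p=1..P. (if p = j then K else 0))"
          by simp
        also have "\<dots> = K" using ij'(2) by (simp add: sum.delta')
        finally show ?thesis using True by simp
      next
        case False then show ?thesis by simp
      qed
      ultimately show ?thesis by simp
    qed
    have "(\<Sum>r'=1..m. \<Sum>p=1..P. - E + (if r' = r \<and> p = j then K else 0)) =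
        (\<Sum>r'=1..m. - (real P * E) + (if r' = r then K else 0))" by (simp only: inner)
    also have "\<dots> = (\<Sum>r'=1..m. - (real P * E)) + (\<Sum>r'=1..m. (if r' = r then K else 0))"
      by (rule sum.distrib)
    also have "(\<Sum>r'=1..m. (if r' = r then K else 0)) = K" using r by (simp add: sum.delta')
    also have "(\<Sum>r'=1..m. - (real P * E)) = - (real m * real P * E)" by simp
    finally show ?thesis .
  qed
  ultimately have "y i * fnet m P d (W t) (Xa t i) \<ge> - (real m * real P * E) + K"
    using yfnet[OF ij'(1)] by simp
  moreover have "real m * real P * E \<le> 1" using mPE unfolding E_def .
  moreover have "E \<ge> 0" using E0 unfolding E_def .
  ultimately show ?thesis unfolding K_def using lnT by linarith
qed

lemma exp_neg3: "exp (- (3 * ln (real T))) = 1 / real T ^ 3"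
proof -
  have "exp (3 * ln (real T)) = exp (ln (real T)) ^ 3"
    using exp_of_nat_mult[of 3 "ln (real T)"] by simp
  also have "\<dots> = real T ^ 3" using dT by simp
  finally show ?thesis by (simp add: exp_minus inverse_eq_divide)
qed

lemma psi_small: assumes H: "Hyp t" and ij: "(i, j) \<in> Ix" and r: "r \<in> {1..m}"
    and big: "rh t i j r > Bd / 2"
  shows "psit t i \<le> 1 / real T ^ 3"
proof -
  have "psit t i \<le> exp (- (y i * fnet m P d (W t) (Xa t i)))" by (rule psi_exp)
  also have "\<dots> \<le> exp (- (3 * ln (real T)))" using fnet_lower[OF H ij r big] by simp
  also have "\<dots> = 1 / real T ^ 3" by (rule exp_neg3)
  finally show ?thesis .
qed

definition "epsS = 3 * eta * (16 * sT)^2 / real T ^ 3"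

lemma c1: "3 * eta * (16 * sT)^2 \<le> Bd / 4"
proof -
  define D where "D = sigma_n^2 * real d"
  have Dp: "D > 0" unfolding D_def using snpos dT by simp
  have L2: "LL \<ge> 1" using LL_big by simp
  have pos: "C * D * LL > 0" using Cpos Dp L2 by simp
  have "eta \<le> 1 / (C * D * LL)" using etab unfolding D_def by (simp add: mult.assoc)
  then have "eta * (C * D * LL) \<le> 1 / (C * D * LL) * (C * D * LL)" using pos by (intro mult_right_mono) auto
  then have eD: "eta * (C * D * LL) \<le> 1" using pos Cpos Dp L2 by simp
  have ss: "sT * sT \<le> sT * LL" using sT_le sT_pos by (intro mult_left_mono) auto
  have "3 * eta * (16 * sT)^2 * (4 * D) = 3072 * (eta * D * (sT * sT))"
    by (simp add: power2_eq_square algebra_simps)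
  also have "\<dots> \<le> 3072 * (eta * D * (sT * LL))"
  proof -
    have "eta * D * (sT * sT) \<le> eta * D * (sT * LL)"
      by (rule mult_left_mono[OF ss]) (use etapos Dp in simp)
    then show ?thesis by simp
  qed
  also have "\<dots> = 3072 * sT * (eta * (C * D * LL)) / C" using Cpos by (simp add: field_simps)
  also have "\<dots> \<le> 3072 * sT * 1 / C"
    using eD sT_pos Cpos by (intro divide_right_mono mult_left_mono) auto
  also have "\<dots> \<le> 10 * sT"
  proof -
    have "3072 * sT \<le> (10 * C) * sT" using Cbig sT_pos by (intro mult_right_mono) auto
    then have "3072 * sT \<le> 10 * sT * C" by (simp add: ac_simps)
    then show ?thesis using Cpos by (simp add: divide_le_eq)
  qed
  finally have "3 * eta * (16 * sT)^2 * (4 * D) \<le> 10 * sT" .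
  then show ?thesis unfolding Bd_def D_def[symmetric] using Dp by (simp add: le_divide_eq field_simps)
qed

lemma epsS0: "epsS \<ge> 0" unfolding epsS_def using etapos by simp

lemma c2: "real T * epsS \<le> Bd / 4"
proof -
  define Z where "Z = 3 * eta * (16 * sT)^2"
  have Z0: "Z \<ge> 0" unfolding Z_def using etapos by simp
  have T1: "real T \<ge> 1" using dT by simp
  have "real T * epsS = Z / real T ^ 2" unfolding epsS_def Z_def[symmetric] using T1
    by (simp add: power2_eq_square power3_eq_cube)
  also have "\<dots> \<le> Z / 1" using Z0 T1 by (intro divide_left_mono) (auto simp: one_le_power)
  also have "\<dots> \<le> Bd / 4" using c1 unfolding Z_def by simp
  finally show ?thesis .
qed

definition "Inv t \<longleftrightarrow> (\<forall>k q r'. (k, q) \<in> Ix \<longrightarrow> r' \<in> {1..m} \<longrightarrow> rh t k q r' \<le> 3/4 * Bd + real t * epsS)"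

lemma inv_hyp: assumes "t \<le> T" "Inv t" shows "Hyp t"
proof -
  have "real t * epsS \<le> real T * epsS" using assms(1) epsS0 by (intro mult_right_mono) auto
  then have "3/4 * Bd + real t * epsS \<le> Bd" using c2 by linarith
  then show ?thesis using assms(2) unfolding Inv_def Hyp_def by (meson order_trans)
qed

lemma inv_step: assumes tT: "t < T" and I: "Inv t" shows "Inv (Suc t)"
  unfolding Inv_def
proof (intro allI impI)
  fix k q r' assume kq: "(k, q) \<in> Ix" and r: "r' \<in> {1..m}"
  have H: "Hyp t" using inv_hyp[OF _ I] tT by simp
  define Iv where "Iv = inner_d d (W t r') (X k q)"
  define ps where "ps = psit t k"
  have ps0: "ps \<ge> 0" "ps \<le> 1" unfolding ps_def using psi_pos[of "y k * fnet m P d (W t) (Xa t k)"] psi_le1 by auto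
  have Iv2: "Iv^2 \<le> (16 * sT)^2"
  proof -
    have "\<bar>Iv\<bar> \<le> 16 * sT" unfolding Iv_def by (rule z_upper[OF H kq r])
    then have "\<bar>Iv\<bar>^2 \<le> (16 * sT)^2" by (intro power_mono) auto
    then show ?thesis by simp
  qed
  have rs: "rh (Suc t) k q r' = rh t k q r' + 3 * eta / real N * ps * Iv^2"
    unfolding Iv_def ps_def by simp
  have "3 * eta / real N \<le> 3 * eta / 1" using N1 etapos by (intro divide_left_mono) auto
  then have eN: "3 * eta / real N \<le> 3 * eta" by simp
  have inc: "3 * eta / real N * ps * Iv^2 \<le> 3 * eta * (16 * sT)^2 * ps"
  proof -
    have "3 * eta / real N * ps * Iv^2 = (3 * eta / real N) * (ps * Iv^2)" by simp
    also have "\<dots> \<le> (3 * eta) * (ps * (16 * sT)^2)"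
      using eN ps0 Iv2 etapos by (intro mult_mono mult_left_mono) auto
    finally show ?thesis by (simp add: ac_simps)
  qed
  have Z0: "3 * eta * (16 * sT)^2 \<ge> 0" using etapos by simp
  show "rh (Suc t) k q r' \<le> 3/4 * Bd + real (Suc t) * epsS"
  proof (cases "rh t k q r' \<le> Bd / 2")
    case True
    have "3 * eta * (16 * sT)^2 * ps \<le> 3 * eta * (16 * sT)^2 * 1"
      using ps0 Z0 by (intro mult_left_mono) auto
    then have "rh (Suc t) k q r' \<le> Bd / 2 + Bd / 4" using rs inc True c1 by linarith
    moreover have "real (Suc t) * epsS \<ge> 0" using epsS0 by simp
    ultimately show ?thesis by linarith
  next
    case False
    then have big: "rh t k q r' > Bd / 2" by simp
    have "ps \<le> 1 / real T ^ 3" unfolding ps_def by (rule psi_small[OF H kq r big])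
    then have "3 * eta * (16 * sT)^2 * ps \<le> 3 * eta * (16 * sT)^2 * (1 / real T ^ 3)"
      using Z0 by (intro mult_left_mono) auto
    also have "\<dots> = epsS" unfolding epsS_def by simp
    finally have "3 * eta / real N * ps * Iv^2 \<le> epsS" using inc by linarith
    moreover have "rh t k q r' \<le> 3/4 * Bd + real t * epsS" using I kq r unfolding Inv_def by blast
    moreover have "real (Suc t) * epsS = real t * epsS + epsS" by (simp add: algebra_simps)
    ultimately show ?thesis using rs by linarith
  qed
qed

lemma inv_all: "t \<le> T \<Longrightarrow> Inv t"
proof (induction t)
  case 0 then show ?case unfolding Inv_def using Bd0 by simp
next
  case (Suc t) then show ?case using inv_step[of t] by simp
qed

lemma final: assumes "t \<le> T" "r \<in> {1..m}" "i \<in> {1..N}" "j \<in> {1..P}" "j \<noteq> s i"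
  shows "rho N P d m eta y X W Xa t i j r \<le> 10 * ln (real T) powr (1/3) / (sigma_n^2 * real d)"
proof -
  have "Hyp t" using inv_hyp[OF assms(1) inv_all[OF assms(1)]] .
  moreover have "(i, j) \<in> Ix" using assms Ix_mem by auto
  ultimately show ?thesis using assms(2) unfolding Hyp_def Bd_def sT_def by blast
qed

end
theorem lemmaF8:
  "\<exists>C0 > 0. \<forall>C \<ge> C0.
     \<forall>(N::nat) (P::nat) (d::nat) (m::nat) (alpha::real) (sigma_n::real) (sigma_0::real)
      (eta::real) (eps::real) (Gam::real) (delta::real) (T::nat)
      (SL::nat set) (SU::nat set) (y::nat \<Rightarrow> real) (s::nat \<Rightarrow> nat)
      (X::nat \<Rightarrow> nat \<Rightarrow> nat \<Rightarrow> real) (W::nat \<Rightarrow> nat \<Rightarrow> nat \<Rightarrow> real)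
      (Xa::nat \<Rightarrow> nat \<Rightarrow> nat \<Rightarrow> nat \<Rightarrow> real).
       alpha > 0 \<and> sigma_n > 0 \<and> sigma_0 > 0 \<and> eta > 0 \<and> eps > 0 \<and> Gam > 0 \<and>
       0 < delta \<and> delta < 1 \<and>
       param_conditions C N P d m alpha sigma_n sigma_0 eta eps Gam delta T
         (real (card SU) / real N) \<and>
       data_model N P d alpha SL SU y s X \<and>
       eventE N P d m sigma_n sigma_0 delta y s X (W 0) \<and>
       adv_training N P d m eta eps y s X W Xa
       \<longrightarrow>
       (\<forall>t \<le> T. \<forall>r \<in> {1..m}. \<forall>i \<in> {1..N}. \<forall>j \<in> {1..P}. j \<noteq> s i \<longrightarrow>
          rho N P d m eta y X W Xa t i j r
            \<le> 10 * ln (real T) powr (1/3) / (sigma_n^2 * real d))"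
proof -
  have main: "alpha > 0 \<and> sigma_n > 0 \<and> sigma_0 > 0 \<and> eta > 0 \<and> eps > 0 \<and> Gam > 0 \<and>
       0 < delta \<and> delta < 1 \<and>
       param_conditions C N P d m alpha sigma_n sigma_0 eta eps Gam delta T
         (real (card SU) / real N) \<and>
       data_model N P d alpha SL SU y s X \<and>
       eventE N P d m sigma_n sigma_0 delta y s X (W 0) \<and>
       adv_training N P d m eta eps y s X W Xa
       \<longrightarrow>
       (\<forall>t \<le> T. \<forall>r \<in> {1..m}. \<forall>i \<in> {1..N}. \<forall>j \<in> {1..P}. j \<noteq> s i \<longrightarrow>
          rho N P d m eta y X W Xa t i j r
            \<le> 10 * ln (real T) powr (1/3) / (sigma_n^2 * real d))"
    if Cb: "10^12 \<le> C"
    for C :: real and N P d m :: nat and alpha sigma_n sigma_0 eta eps Gam delta :: real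
      and T :: nat and SL SU :: "nat set" and y :: "nat \<Rightarrow> real" and s :: "nat \<Rightarrow> nat"
      and X :: "nat \<Rightarrow> nat \<Rightarrow> nat \<Rightarrow> real" and W :: "nat \<Rightarrow> nat \<Rightarrow> nat \<Rightarrow> real"
      and Xa :: "nat \<Rightarrow> nat \<Rightarrow> nat \<Rightarrow> nat \<Rightarrow> real"
  proof
    assume h: "alpha > 0 \<and> sigma_n > 0 \<and> sigma_0 > 0 \<and> eta > 0 \<and> eps > 0 \<and> Gam > 0 \<and>
       0 < delta \<and> delta < 1 \<and>
       param_conditions C N P d m alpha sigma_n sigma_0 eta eps Gam delta T
         (real (card SU) / real N) \<and>
       data_model N P d alpha SL SU y s X \<and>
       eventE N P d m sigma_n sigma_0 delta y s X (W 0) \<and>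
       adv_training N P d m eta eps y s X W Xa"
    show "\<forall>t \<le> T. \<forall>r \<in> {1..m}. \<forall>i \<in> {1..N}. \<forall>j \<in> {1..P}. j \<noteq> s i \<longrightarrow>
          rho N P d m eta y X W Xa t i j r
            \<le> 10 * ln (real T) powr (1/3) / (sigma_n^2 * real d)"
    proof (cases "N = 0")
      case True then show ?thesis by simp
    next
      case False
      then have N1: "1 \<le> N" by simp
      have loc: "Fx C N P d m alpha sigma_n sigma_0 eta eps Gam delta T SL SU y s X W Xa"
        unfolding Fx_def using h Cb N1 by auto
      show ?thesis using Fx.final[OF loc] by blast
    qed
  qed
  show ?thesis
    apply (rule exI[of _ "10^12"])
    apply (rule conjI)
     apply simp
    apply (rule allI, rule impI)
    apply (rule allI)+
    apply (rule main)
    apply assumption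
    done
qed

end
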